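(* Let $P=K\overline{K}$, $Q=L\overline{L}$ and let $\widetilde{U}=U_{K,L,norm}/J$ where $J$ is the two-sided ideal generated by $K^n-P$, $L^n-Q$, $E^n$, $F^n$ (with the induced bialgebra structure). Put $$\widetilde{R}=\sum_{0\le i,j,m\le n-1}A^{ij}_m(q)\,E^mK^i\otimes F^mK^j+\sum_{0\le i,j,m\le n-1}A^{ij}_m(q)\,E^mL^i\otimes F^mL^j,$$ with the convention $K^0:=P$, $L^0:=Q$ (equivalently $\widetilde{R}=(P\otimes P)\widetilde{R}_{PP}+(Q\otimes Q)\widetilde{R}_{QQ}$ with $\widetilde{R}_{PP},\widetilde{R}_{QQ}$ the two sums). Then $\widetilde{R}$ is a universal near-$R$-matrix: $\Delta^{cop}(b)\widetilde{R}=\widetilde{R}\Delta(b)$ for all $b\in\widetilde{U}$, and there exists $\widetilde{R}^{\dagger}\in\widetilde{U}\otimes\widetilde{U}$ with $\widetilde{R}\widetilde{R}^{\dagger}\widetilde{R}=\widetilde{R}$ and $\widetilde{R}^{\dagger}\widetilde{R}\widetilde{R}^{\dagger}=\widetilde{R}^{\dagger}$.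
   Context: Let $n>1$ be an odd integer and $q$ a primitive $n$-th root of unity. $U_{K,L,norm}$ is the unital associative $\mathbb{C}$-algebra generated by $K,\overline{K},L,\overline{L},E,F$ subject to $K\overline{K}K=K$, $\overline{K}K\overline{K}=\overline{K}$, $K\overline{K}=\overline{K}K$, $L\overline{L}L=L$, $\overline{L}L\overline{L}=\overline{L}$, $L\overline{L}=\overline{L}L$, $K\overline{K}+L\overline{L}=\mathbf{1}$, $KE=q^2EK$, $LE=q^2EL$, $\overline{K}E=q^{-2}E\overline{K}$, $\overline{L}E=q^{-2}E\overline{L}$, $KF=q^{-2}FK$, $LF=q^{-2}FL$, $\overline{K}F=q^2F\overline{K}$, $\overline{L}F=q^2F\overline{L}$, $EF-FE=\frac{(K+L)-(\overline{K}+\overline{L})}{q-q^{-1}}$, with bialgebra structure given by the algebra homomorphisms $\Delta(K)=K\otimes K$, $\Delta(\overline{K})=\overline{K}\otimes\overline{K}$, $\Delta(L)=L\otimes L+L\otimes K+K\otimes L$, $\Delta(\overline{L})=\overline{L}\otimes\overline{L}+\overline{L}\otimes\overline{K}+\overline{K}\otimes\overline{L}$, $\Delta(E)=\mathbf{1}\otimes E+E\otimes(K+L)$, $\Delta(F)=F\otimes\mathbf{1}+(\overline{K}+\overline{L})\otimes F$, $\varepsilon(K)=\varepsilon(\overline{K})=1$, $\varepsilon(L)=\varepsilon(\overline{L})=\varepsilon(E)=\varepsilon(F)=0$. $\Delta^{cop}=\tau\circ\Delta$ with $\tau$ the flip. The coefficients are $A^{ij}_m(q)=\frac{1}{n}\frac{(q-q^{-1})^m}{[m]!}q^{m(m-1)/2+2m(i-j)-2ij}$,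 where $[m]=\frac{q^m-q^{-m}}{q-q^{-1}}$, $[m]!=[1][2]\cdots[m]$. *)

theory Defs
  imports Complex_Main "HOL-Library.Poly_Mapping"
begin

text \<open>The free unital associative C-algebra on generators 'g is then
the algebra of finitely supported functions 'g word \<Rightarrow>0 complex with the
convolution product provided by Poly_Mapping (a ring_1).\<close>

datatype 'g word = Word "'g list"

instantiation word :: (type) monoid_add
begin
definition zero_word :: "'g word" where "zero_word = Word []"
fun plus_word :: "'g word \<Rightarrow> 'g word \<Rightarrow> 'g word" where
  "plus_word (Word u) (Word v) = Word (u @ v)"
instance
proof
  fix a b c :: "'g word"
  show "a + b + c = a + (b + c)" by (cases a; cases b; cases c) simp
  show "0 + a = a" by (cases a) (simp add: zero_word_def)
  show "a + 0 = a" by (cases a) (simp add: zero_word_def)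
qed
end

type_synonym 'g free = "'g word \<Rightarrow>\<^sub>0 complex"

definition gen :: "'g \<Rightarrow> 'g free" where
  "gen x = Poly_Mapping.single (Word [x]) 1"

definition sc :: "complex \<Rightarrow> 'g free" where
  "sc c = Poly_Mapping.single 0 c"

text \<open>The unique unital algebra homomorphism free('g) \<rightarrow> free('h) sending
each generator x to phi x.\<close>
fun word_hom :: "('g \<Rightarrow> 'h free) \<Rightarrow> 'g list \<Rightarrow> 'h free" where
  "word_hom \<phi> [] = 1"
| "word_hom \<phi> (x # xs) = \<phi> x * word_hom \<phi> xs"

definition ext_hom :: "('g \<Rightarrow> 'h free) \<Rightarrow> 'g free \<Rightarrow> 'h free" where
  "ext_hom \<phi> p = (\<Sum>w\<in>Poly_Mapping.keys p.
      sc (Poly_Mapping.lookup p w) * (case w of Word u \<Rightarrow> word_hom \<phi> u))"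

definition rename :: "('g \<Rightarrow> 'h) \<Rightarrow> 'g free \<Rightarrow> 'h free" where
  "rename f = ext_hom (\<lambda>x. gen (f x))"

inductive_set ideal_gen :: "'g free set \<Rightarrow> 'g free set" for S where
  zero: "0 \<in> ideal_gen S"
| base: "s \<in> S \<Longrightarrow> s \<in> ideal_gen S"
| add: "a \<in> ideal_gen S \<Longrightarrow> b \<in> ideal_gen S \<Longrightarrow> a + b \<in> ideal_gen S"
| mult: "x \<in> ideal_gen S \<Longrightarrow> a * x * b \<in> ideal_gen S"

text \<open>Equality in the quotient algebra free('g)/(S).\<close>
definition cong_mod :: "'g free set \<Rightarrow> 'g free \<Rightarrow> 'g free \<Rightarrow> bool" where
  "cong_mod S x y \<longleftrightarrow> x - y \<in> ideal_gen S"

datatype G = K | Kb | L | Lb | E | F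

definition rels_U :: "complex \<Rightarrow> G free set" where
  "rels_U q = (let k = gen K; kb = gen Kb; l = gen L; lb = gen Lb; e = gen E; f = gen F in
    { k*kb*k - k, kb*k*kb - kb, k*kb - kb*k,
      l*lb*l - l, lb*l*lb - lb, l*lb - lb*l,
      k*kb + l*lb - 1,
      k*e - sc (q^2) * e*k, l*e - sc (q^2) * e*l,
      kb*e - sc (inverse q ^ 2) * e*kb, lb*e - sc (inverse q ^ 2) * e*lb,
      k*f - sc (inverse q ^ 2) * f*k, l*f - sc (inverse q ^ 2) * f*l,
      kb*f - sc (q^2) * f*kb, lb*f - sc (q^2) * f*lb,
      e*f - f*e - sc (inverse (q - inverse q)) * ((k + l) - (kb + lb)) })"

definition genP :: "G free" where "genP = gen K * gen Kb"
definition genQ :: "G free" where "genQ = gen L * gen Lb"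

definition rels_Ut :: "complex \<Rightarrow> nat \<Rightarrow> G free set" where
  "rels_Ut q n = rels_U q \<union>
     {gen K ^ n - genP, gen L ^ n - genQ, gen E ^ n, gen F ^ n}"

text \<open>Generators Inl x stand for x \<otimes> 1, Inr x for 1 \<otimes> x.\<close>
definition rels_tensor :: "complex \<Rightarrow> nat \<Rightarrow> (G + G) free set" where
  "rels_tensor q n = rename Inl ` rels_Ut q n \<union> rename Inr ` rels_Ut q n \<union>
     {gen (Inl a) * gen (Inr b) - gen (Inr b) * gen (Inl a) | a b. True}"

definition gl :: "G \<Rightarrow> (G + G) free" where "gl x = gen (Inl x)"
definition gr :: "G \<Rightarrow> (G + G) free" where "gr x = gen (Inr x)"

fun Delta_gen :: "G \<Rightarrow> (G + G) free" where
  "Delta_gen K = gl K * gr K"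
| "Delta_gen Kb = gl Kb * gr Kb"
| "Delta_gen L = gl L * gr L + gl L * gr K + gl K * gr L"
| "Delta_gen Lb = gl Lb * gr Lb + gl Lb * gr Kb + gl Kb * gr Lb"
| "Delta_gen E = gr E + gl E * (gr K + gr L)"
| "Delta_gen F = gl F + (gl Kb + gl Lb) * gr F"

definition Delta :: "G free \<Rightarrow> (G + G) free" where
  "Delta = ext_hom Delta_gen"

definition flip :: "'a + 'a \<Rightarrow> 'a + 'a" where
  "flip z = (case z of Inl a \<Rightarrow> Inr a | Inr a \<Rightarrow> Inl a)"

definition Delta_cop :: "G free \<Rightarrow> (G + G) free" where
  "Delta_cop b = rename flip (Delta b)"

definition qint :: "complex \<Rightarrow> nat \<Rightarrow> complex" where
  "qint q m = (q ^ m - inverse q ^ m) / (q - inverse q)"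

definition qfact :: "complex \<Rightarrow> nat \<Rightarrow> complex" where
  "qfact q m = (\<Prod>k = 1..m. qint q k)"

definition Acoef :: "complex \<Rightarrow> nat \<Rightarrow> nat \<Rightarrow> nat \<Rightarrow> nat \<Rightarrow> complex" where
  "Acoef q n i j m = (1 / of_nat n) * ((q - inverse q) ^ m / qfact q m) *
     q powi (int (m * (m - 1) div 2) + 2 * int m * (int i - int j) - 2 * int i * int j)"

definition Kpow :: "G free \<Rightarrow> nat \<Rightarrow> G free" where
  "Kpow P0 i = (if i = 0 then P0 else gen K ^ i)"

definition Lpow :: "G free \<Rightarrow> nat \<Rightarrow> G free" where
  "Lpow Q0 i = (if i = 0 then Q0 else gen L ^ i)"

definition Rtilde :: "complex \<Rightarrow> nat \<Rightarrow> (G + G) free" where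
  "Rtilde q n =
     (\<Sum>i<n. \<Sum>j<n. \<Sum>m<n. sc (Acoef q n i j m) *
        (rename Inl (gen E ^ m * Kpow genP i) * rename Inr (gen F ^ m * Kpow genP j)))
   + (\<Sum>i<n. \<Sum>j<n. \<Sum>m<n. sc (Acoef q n i j m) *
        (rename Inl (gen E ^ m * Lpow genQ i) * rename Inr (gen F ^ m * Lpow genQ j)))"

end

theory Submission
  imports Defs
begin


lemma sc_0[simp]: "sc 0 = 0" by (simp add: sc_def)
lemma sc_1[simp]: "sc 1 = 1" by (simp add: sc_def)
lemma sc_add: "sc (a + b) = sc a + sc b" by (simp add: sc_def single_add)
lemma sc_mult: "sc (a * b) = sc a * sc b" by (simp add: sc_def mult_single)
lemma sc_uminus: "sc (- a) = - sc a" by (simp add: sc_def single_uminus)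
lemma sc_diff: "sc (a - b) = sc a - sc b" by (simp add: sc_def single_diff)

lemma pm_expansion: "p = (\<Sum>w\<in>Poly_Mapping.keys p. Poly_Mapping.single w (Poly_Mapping.lookup p w))"
proof -
  have *: "finite I
        \<Longrightarrow> Poly_Mapping.lookup (\<Sum>i\<in>I. Poly_Mapping.single i (Poly_Mapping.lookup p i)) j =
            (if j \<in> I then Poly_Mapping.lookup p j else 0)" for I j
    by (induction I rule: finite_induct) (auto simp: lookup_single lookup_add when_def)
  show ?thesis
    by (rule poly_mapping_eqI) (fastforce simp add: in_keys_iff *)
qed

lemma sc_single_comm: "sc c * Poly_Mapping.single w d = Poly_Mapping.single w d * sc c"
  by (simp add: sc_def mult_single mult.commute)

lemma sc_comm: "sc c * x = x * sc c"
proof -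
  have "sc c * x = sc c * (\<Sum>w\<in>Poly_Mapping.keys x. Poly_Mapping.single w (Poly_Mapping.lookup x w))"
    by (subst pm_expansion[of x]) simp
  also have "\<dots> = (\<Sum>w\<in>Poly_Mapping.keys x. Poly_Mapping.single w (Poly_Mapping.lookup x w)) * sc c"
    by (simp add: sum_distrib_left sum_distrib_right sc_single_comm)
  also have "\<dots> = x * sc c" by (subst (2) pm_expansion[of x]) simp
  finally show ?thesis .
qed

definition wh :: "('g \<Rightarrow> 'h free) \<Rightarrow> 'g word \<Rightarrow> 'h free" where
  "wh \<phi> w = (case w of Word u \<Rightarrow> word_hom \<phi> u)"

lemma word_hom_append: "word_hom \<phi> (u @ v) = word_hom \<phi> u * word_hom \<phi> v"
  by (induction u) (simp_all add: mult.assoc)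

lemma wh_add: "wh \<phi> (a + b) = wh \<phi> a * wh \<phi> b"
  by (cases a; cases b) (simp add: wh_def word_hom_append)

lemma ext_hom_wh: "ext_hom \<phi> p = (\<Sum>w\<in>Poly_Mapping.keys p. sc (Poly_Mapping.lookup p w) * wh \<phi> w)"
  by (simp add: ext_hom_def wh_def)

lemma ext_hom_superset:
  assumes "finite A" "Poly_Mapping.keys p \<subseteq> A"
  shows "ext_hom \<phi> p = (\<Sum>w\<in>A. sc (Poly_Mapping.lookup p w) * wh \<phi> w)"
  unfolding ext_hom_wh
  by (rule sum.mono_neutral_left) (use assms in \<open>auto simp: in_keys_iff\<close>)

lemma ext_hom_add: "ext_hom \<phi> (p + r) = ext_hom \<phi> p + ext_hom \<phi> r"
proof -
  let ?A = "Poly_Mapping.keys p \<union> Poly_Mapping.keys r"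
  have f: "finite ?A" by simp
  have "ext_hom \<phi> (p + r) = (\<Sum>w\<in>?A. sc (Poly_Mapping.lookup (p+r) w) * wh \<phi> w)"
    by (rule ext_hom_superset[OF f]) (simp add: keys_add)
  also have "\<dots> = (\<Sum>w\<in>?A. sc (Poly_Mapping.lookup p w) * wh \<phi> w) + (\<Sum>w\<in>?A. sc (Poly_Mapping.lookup r w) * wh \<phi> w)"
    by (simp add: lookup_add sc_add distrib_right sum.distrib)
  also have "\<dots> = ext_hom \<phi> p + ext_hom \<phi> r"
    by (simp add: ext_hom_superset[OF f])
  finally show ?thesis .
qed

lemma ext_hom_0[simp]: "ext_hom \<phi> 0 = 0" by (simp add: ext_hom_def)

lemma ext_hom_sum: "ext_hom \<phi> (sum g A) = (\<Sum>a\<in>A. ext_hom \<phi> (g a))"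
  by (induction A rule: infinite_finite_induct) (simp_all add: ext_hom_add)

lemma ext_hom_uminus: "ext_hom \<phi> (- p) = - ext_hom \<phi> p"
  using ext_hom_add[of \<phi> p "-p"] by (simp add: neg_eq_iff_add_eq_0[symmetric])

lemma ext_hom_diff: "ext_hom \<phi> (p - r) = ext_hom \<phi> p - ext_hom \<phi> r"
  using ext_hom_add[of \<phi> p "-r"] by (simp add: ext_hom_uminus)

lemma ext_hom_single: "ext_hom \<phi> (Poly_Mapping.single w c) = sc c * wh \<phi> w"
  by (cases "c = 0") (simp_all add: ext_hom_wh)

lemma ext_hom_mult: "ext_hom \<phi> (p * r) = ext_hom \<phi> p * ext_hom \<phi> r"
proof -
  let ?A = "Poly_Mapping.keys p" and ?B = "Poly_Mapping.keys r"
  have "p * r = (\<Sum>a\<in>?A. Poly_Mapping.single a (Poly_Mapping.lookup p a)) *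
                (\<Sum>b\<in>?B. Poly_Mapping.single b (Poly_Mapping.lookup r b))"
    by (subst pm_expansion[of p], subst pm_expansion[of r]) simp
  also have "\<dots> = (\<Sum>a\<in>?A. \<Sum>b\<in>?B. Poly_Mapping.single (a+b) (Poly_Mapping.lookup p a * Poly_Mapping.lookup r b))"
    by (simp add: sum_distrib_left sum_distrib_right mult_single sum.swap[where A="Poly_Mapping.keys r"])
  finally have "ext_hom \<phi> (p * r) = (\<Sum>a\<in>?A. \<Sum>b\<in>?B. sc (Poly_Mapping.lookup p a * Poly_Mapping.lookup r b) * wh \<phi> (a+b))"
    by (simp add: ext_hom_sum ext_hom_single)
  also have "\<dots> = (\<Sum>a\<in>?A. \<Sum>b\<in>?B. (sc (Poly_Mapping.lookup p a) * wh \<phi> a) * (sc (Poly_Mapping.lookup r b) * wh \<phi> b))"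
    by (simp add: sc_mult wh_add mult.assoc sc_comm[of "Poly_Mapping.lookup r _"])
  also have "\<dots> = ext_hom \<phi> p * ext_hom \<phi> r"
    by (simp add: ext_hom_wh sum_distrib_left sum_distrib_right sum.swap[where A="Poly_Mapping.keys r"])
  finally show ?thesis .
qed

lemma ext_hom_sc[simp]: "ext_hom \<phi> (sc c) = sc c"
  by (simp add: sc_def ext_hom_single wh_def zero_word_def)

lemma ext_hom_1[simp]: "ext_hom \<phi> 1 = 1"
  using ext_hom_sc[of \<phi> 1] by simp

lemma ext_hom_gen[simp]: "ext_hom \<phi> (gen x) = \<phi> x"
  by (simp add: gen_def ext_hom_single wh_def)

lemma ext_hom_power: "ext_hom \<phi> (p ^ m) = ext_hom \<phi> p ^ m"
  by (induction m) (simp_all add: ext_hom_mult)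

lemmas ext_hom_simps = ext_hom_add ext_hom_mult ext_hom_diff ext_hom_uminus ext_hom_sum ext_hom_power

lemma rename_gen[simp]: "rename f (gen x) = gen (f x)" by (simp add: rename_def)
lemma rename_sc[simp]: "rename f (sc c) = sc c" by (simp add: rename_def)
lemma rename_1[simp]: "rename f 1 = 1" by (simp add: rename_def)
lemma rename_0[simp]: "rename f 0 = 0" by (simp add: rename_def)
lemma rename_add[simp]: "rename f (a + b) = rename f a + rename f b" by (simp add: rename_def ext_hom_add)
lemma rename_mult[simp]: "rename f (a * b) = rename f a * rename f b" by (simp add: rename_def ext_hom_mult)
lemma rename_diff[simp]: "rename f (a - b) = rename f a - rename f b" by (simp add: rename_def ext_hom_diff)
lemma rename_uminus[simp]: "rename f (- b) = - rename f b" by (simp add: rename_def ext_hom_uminus)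
lemma rename_power[simp]: "rename f (a ^ m) = rename f a ^ m" by (simp add: rename_def ext_hom_power)
lemma rename_sum[simp]: "rename f (sum g A) = (\<Sum>x\<in>A. rename f (g x))" by (simp add: rename_def ext_hom_sum)

lemma single_word_gen: "Poly_Mapping.single (Word (x # u)) c = gen x * Poly_Mapping.single (Word u) c"
  by (simp add: gen_def mult_single)

lemma free_induct:
  assumes sc: "\<And>c. P (sc c)" and g: "\<And>x. P (gen x)"
    and add: "\<And>a b. P a \<Longrightarrow> P b \<Longrightarrow> P (a + b)"
    and mult: "\<And>a b. P a \<Longrightarrow> P b \<Longrightarrow> P (a * b)"
  shows "P y"
proof -
  have s: "P (Poly_Mapping.single (Word u) c)" for u c
  proof (induction u)
    case Nil
    then show ?case using sc[of c] by (simp add: sc_def zero_word_def)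
  next
    case (Cons x u)
    then show ?case by (simp add: single_word_gen mult g)
  qed
  have "P (\<Sum>w\<in>A. Poly_Mapping.single w (Poly_Mapping.lookup y w))" if "finite A" for A
    using that
  proof (induction A rule: finite_induct)
    case empty
    then show ?case using sc[of 0] by simp
  next
    case (insert w A)
    then show ?case by (cases w) (simp add: add s)
  qed
  then show ?thesis by (subst pm_expansion) simp
qed


lemma ig_neg: "x \<in> ideal_gen S \<Longrightarrow> - x \<in> ideal_gen S"
  using ideal_gen.mult[of x S "-1" 1] by simp
lemma ig_diff: "x \<in> ideal_gen S \<Longrightarrow> y \<in> ideal_gen S \<Longrightarrow> x - y \<in> ideal_gen S"
  using ideal_gen.add[OF _ ig_neg] by (metis diff_conv_add_uminus)
lemma ig_lmult: "x \<in> ideal_gen S \<Longrightarrow> a * x \<in> ideal_gen S"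
  using ideal_gen.mult[of x S a 1] by simp
lemma ig_rmult: "x \<in> ideal_gen S \<Longrightarrow> x * b \<in> ideal_gen S"
  using ideal_gen.mult[of x S 1 b] by simp
lemma ig_sum: "(\<And>i. i \<in> A \<Longrightarrow> g i \<in> ideal_gen S) \<Longrightarrow> sum g A \<in> ideal_gen S"
  by (induction A rule: infinite_finite_induct) (auto intro: ideal_gen.zero ideal_gen.add)
lemma ig_mono: "x \<in> ideal_gen S \<Longrightarrow> S \<subseteq> T \<Longrightarrow> x \<in> ideal_gen T"
  by (induction rule: ideal_gen.induct) (auto intro: ideal_gen.intros)
lemma ig_rename: "x \<in> ideal_gen S \<Longrightarrow> rename f x \<in> ideal_gen (rename f ` S)"
  by (induction rule: ideal_gen.induct) (auto intro: ideal_gen.intros)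

lemma cm_refl[simp, intro]: "cong_mod S x x" by (simp add: cong_mod_def ideal_gen.zero)
lemma cm_sym: "cong_mod S x y \<Longrightarrow> cong_mod S y x"
  unfolding cong_mod_def using ig_neg by fastforce
lemma cm_trans[trans]: "cong_mod S x y \<Longrightarrow> cong_mod S y z \<Longrightarrow> cong_mod S x z"
  unfolding cong_mod_def using ideal_gen.add by fastforce
lemma cm_add: "cong_mod S a b \<Longrightarrow> cong_mod S c d \<Longrightarrow> cong_mod S (a + c) (b + d)"
  unfolding cong_mod_def using ideal_gen.add by (fastforce simp: algebra_simps)
lemma cm_diff: "cong_mod S a b \<Longrightarrow> cong_mod S c d \<Longrightarrow> cong_mod S (a - c) (b - d)"
  unfolding cong_mod_def using ig_diff by (fastforce simp: algebra_simps)
lemma cm_uminus: "cong_mod S a b \<Longrightarrow> cong_mod S (- a) (- b)"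
  unfolding cong_mod_def using ig_neg by (fastforce simp: algebra_simps)
lemma cm_mult: "cong_mod S a b \<Longrightarrow> cong_mod S c d \<Longrightarrow> cong_mod S (a * c) (b * d)"
proof -
  assume "cong_mod S a b" "cong_mod S c d"
  then have "(a - b) * c \<in> ideal_gen S" "b * (c - d) \<in> ideal_gen S"
    by (auto simp: cong_mod_def intro: ig_lmult ig_rmult)
  then have "(a - b) * c + b * (c - d) \<in> ideal_gen S" by (rule ideal_gen.add)
  then show ?thesis by (simp add: cong_mod_def algebra_simps)
qed
lemma cm_multL: "cong_mod S c d \<Longrightarrow> cong_mod S (a * c) (a * d)" by (rule cm_mult) auto
lemma cm_multR: "cong_mod S a b \<Longrightarrow> cong_mod S (a * c) (b * c)" by (rule cm_mult) auto
lemma cm_addL: "cong_mod S c d \<Longrightarrow> cong_mod S (a + c) (a + d)" by (rule cm_add) auto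
lemma cm_addR: "cong_mod S a b \<Longrightarrow> cong_mod S (a + c) (b + c)" by (rule cm_add) auto
lemma cm_sum: "(\<And>i. i \<in> A \<Longrightarrow> cong_mod S (f i) (g i)) \<Longrightarrow> cong_mod S (sum f A) (sum g A)"
  unfolding cong_mod_def by (simp add: sum_subtractf[symmetric] ig_sum)
lemma cm_power: "cong_mod S a b \<Longrightarrow> cong_mod S (a ^ m) (b ^ m)"
  by (induction m) (auto intro: cm_mult)
lemma cm_base: "x \<in> S \<Longrightarrow> cong_mod S x 0"
  by (simp add: cong_mod_def ideal_gen.base)
lemma cm_base_eq: "x - y \<in> S \<Longrightarrow> cong_mod S x y"
  by (simp add: cong_mod_def ideal_gen.base)
lemma cm_eq: "x = y \<Longrightarrow> cong_mod S x y" by simp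
lemma cm_rename: "cong_mod S x y \<Longrightarrow> cong_mod (rename f ` S) (rename f x) (rename f y)"
  unfolding cong_mod_def using ig_rename by fastforce
lemma cm_mono: "S \<subseteq> T \<Longrightarrow> cong_mod S x y \<Longrightarrow> cong_mod T x y"
  unfolding cong_mod_def using ig_mono by metis
lemma cm_0_iff: "cong_mod S x y \<longleftrightarrow> cong_mod S (x - y) 0"
  by (simp add: cong_mod_def)

lemma cm_lift_l: "cong_mod (rels_Ut q n) x y \<Longrightarrow> cong_mod (rels_tensor q n) (rename Inl x) (rename Inl y)"
  by (rule cm_mono[OF _ cm_rename]) (auto simp: rels_tensor_def)
lemma cm_lift_r: "cong_mod (rels_Ut q n) x y \<Longrightarrow> cong_mod (rels_tensor q n) (rename Inr x) (rename Inr y)"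
  by (rule cm_mono[OF _ cm_rename]) (auto simp: rels_tensor_def)

lemma gen_lr_comm: "cong_mod (rels_tensor q n) (gen (Inl a) * gen (Inr b)) (gen (Inr b) * gen (Inl a))"
  by (rule cm_base_eq) (auto simp: rels_tensor_def)

lemma comm_closed:
  assumes "\<And>x. cong_mod S (z * gen x) (gen x * z)"
  shows "cong_mod S (z * y) (y * z)"
proof (induction y rule: free_induct)
  case (1 c) then show ?case by (simp add: sc_comm)
next
  case (2 x) then show ?case by (rule assms)
next
  case (3 a b) then show ?case by (simp add: distrib_left distrib_right cm_add)
next
  case (4 a b)
  have "z * (a * b) = (z * a) * b" by (simp add: mult.assoc)
  also have "cong_mod S \<dots> ((a * z) * b)" by (rule cm_multR[OF 4(1)])
  also have "(a * z) * b = a * (z * b)" by (simp add: mult.assoc)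
  also have "cong_mod S \<dots> (a * (b * z))" by (rule cm_multL[OF 4(2)])
  also have "a * (b * z) = a * b * z" by (simp add: mult.assoc)
  finally show ?case .
qed

lemma lr_comm: "cong_mod (rels_tensor q n) (rename Inl x * rename Inr y) (rename Inr y * rename Inl x)"
proof -
  have "cong_mod (rels_tensor q n) (gen (Inl a) * rename Inr y) (rename Inr y * gen (Inl a))" for a
  proof (induction y rule: free_induct)
    case (1 c) then show ?case by (simp add: sc_comm)
  next
    case (2 x) then show ?case using gen_lr_comm by simp
  next
    case (3 a b) then show ?case by (simp add: distrib_left distrib_right cm_add)
  next
    case (4 u v)
    have "gen (Inl a) * (rename Inr u * rename Inr v) = (gen (Inl a) * rename Inr u) * rename Inr v" by (simp add: mult.assoc)
    also have "cong_mod (rels_tensor q n) \<dots> ((rename Inr u * gen (Inl a)) * rename Inr v)" by (rule cm_multR[OF 4(1)])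
    also have "\<dots> = rename Inr u * (gen (Inl a) * rename Inr v)" by (simp add: mult.assoc)
    also have "cong_mod (rels_tensor q n) \<dots> (rename Inr u * (rename Inr v * gen (Inl a)))" by (rule cm_multL[OF 4(2)])
    finally show ?case by (simp add: mult.assoc)
  qed
  then have h: "cong_mod (rels_tensor q n) (gen g * rename Inr y) (rename Inr y * gen g)" if "g = Inl a" for a g
    using that by simp
  show ?thesis
  proof (induction x rule: free_induct)
    case (1 c) then show ?case by (simp add: sc_comm)
  next
    case (2 x) then show ?case using h by simp
  next
    case (3 a b) then show ?case by (simp add: distrib_left distrib_right cm_add)
  next
    case (4 u v)
    have "rename Inl u * rename Inl v * rename Inr y = rename Inl u * (rename Inl v * rename Inr y)" by (simp add: mult.assoc)
    also have "cong_mod (rels_tensor q n) \<dots> (rename Inl u * (rename Inr y * rename Inl v))" by (rule cm_multL[OF 4(2)])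
    also have "\<dots> = (rename Inl u * rename Inr y) * rename Inl v" by (simp add: mult.assoc)
    also have "cong_mod (rels_tensor q n) \<dots> ((rename Inr y * rename Inl u) * rename Inl v)" by (rule cm_multR[OF 4(1)])
    finally show ?case by (simp add: mult.assoc)
  qed
qed


locale RM =
  fixes q :: complex and n :: nat
  assumes odd_n: "odd n" and n_gt1: "n > 1" and qn: "q ^ n = 1"
    and prim: "\<forall>k. 0 < k \<and> k < n \<longrightarrow> q ^ k \<noteq> 1"
begin

abbreviation ceq1 (infix "\<sim>" 50) where "x \<sim> y \<equiv> cong_mod (rels_Ut q n) x y"

lemma rel: "x - y \<in> rels_Ut q n \<Longrightarrow> x \<sim> y" by (rule cm_base_eq)

lemma R1: "gen K * gen Kb * gen K \<sim> gen K" by (rule rel) (simp add: rels_Ut_def rels_U_def Let_def)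
lemma R2: "gen Kb * gen K * gen Kb \<sim> gen Kb" by (rule rel) (simp add: rels_Ut_def rels_U_def Let_def)
lemma R3: "gen K * gen Kb \<sim> gen Kb * gen K" by (rule rel) (simp add: rels_Ut_def rels_U_def Let_def)
lemma R4: "gen L * gen Lb * gen L \<sim> gen L" by (rule rel) (simp add: rels_Ut_def rels_U_def Let_def)
lemma R5: "gen Lb * gen L * gen Lb \<sim> gen Lb" by (rule rel) (simp add: rels_Ut_def rels_U_def Let_def)
lemma R6: "gen L * gen Lb \<sim> gen Lb * gen L" by (rule rel) (simp add: rels_Ut_def rels_U_def Let_def)
lemma R7: "gen K * gen Kb + gen L * gen Lb \<sim> 1" by (rule rel) (simp add: rels_Ut_def rels_U_def Let_def)
lemma R8: "gen K * gen E \<sim> sc (q^2) * gen E * gen K" by (rule rel) (simp add: rels_Ut_def rels_U_def Let_def)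
lemma R9: "gen L * gen E \<sim> sc (q^2) * gen E * gen L" by (rule rel) (simp add: rels_Ut_def rels_U_def Let_def)
lemma R10: "gen Kb * gen E \<sim> sc (inverse q ^ 2) * gen E * gen Kb" by (rule rel) (simp add: rels_Ut_def rels_U_def Let_def)
lemma R11: "gen Lb * gen E \<sim> sc (inverse q ^ 2) * gen E * gen Lb" by (rule rel) (simp add: rels_Ut_def rels_U_def Let_def)
lemma R12: "gen K * gen F \<sim> sc (inverse q ^ 2) * gen F * gen K" by (rule rel) (simp add: rels_Ut_def rels_U_def Let_def)
lemma R13: "gen L * gen F \<sim> sc (inverse q ^ 2) * gen F * gen L" by (rule rel) (simp add: rels_Ut_def rels_U_def Let_def)
lemma R14: "gen Kb * gen F \<sim> sc (q^2) * gen F * gen Kb" by (rule rel) (simp add: rels_Ut_def rels_U_def Let_def)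
lemma R15: "gen Lb * gen F \<sim> sc (q^2) * gen F * gen Lb" by (rule rel) (simp add: rels_Ut_def rels_U_def Let_def)
lemma R16: "gen E * gen F - gen F * gen E \<sim> sc (inverse (q - inverse q)) * ((gen K + gen L) - (gen Kb + gen Lb))"
  by (rule rel) (simp add: rels_Ut_def rels_U_def Let_def)
lemma RKn: "gen K ^ n \<sim> gen K * gen Kb" by (rule rel) (simp add: rels_Ut_def genP_def)
lemma RLn: "gen L ^ n \<sim> gen L * gen Lb" by (rule rel) (simp add: rels_Ut_def genQ_def)
lemma REn: "gen E ^ n \<sim> 0" by (rule cm_base) (simp add: rels_Ut_def)
lemma RFn: "gen F ^ n \<sim> 0" by (rule cm_base) (simp add: rels_Ut_def)

lemma cs: "x \<sim> y \<Longrightarrow> y \<sim> x" by (rule cm_sym)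

lemma D1: "genP * genP \<sim> genP"
proof -
  have "genP * genP = (gen K * gen Kb * gen K) * gen Kb" by (simp add: genP_def mult.assoc)
  also have "\<dots> \<sim> gen K * gen Kb" by (rule cm_multR[OF R1])
  finally show ?thesis by (simp add: genP_def)
qed
lemma D2: "genQ * genQ \<sim> genQ"
proof -
  have "genQ * genQ = (gen L * gen Lb * gen L) * gen Lb" by (simp add: genQ_def mult.assoc)
  also have "\<dots> \<sim> gen L * gen Lb" by (rule cm_multR[OF R4])
  finally show ?thesis by (simp add: genQ_def)
qed
lemma D3: "genP + genQ \<sim> 1" using R7 by (simp add: genP_def genQ_def)
lemma Q_eq: "genQ \<sim> 1 - genP"
proof -
  have "genQ = (genP + genQ) - genP" by simp
  also have "\<dots> \<sim> 1 - genP" by (rule cm_diff[OF D3]) simp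
  finally show ?thesis .
qed
lemma P_eq: "genP \<sim> 1 - genQ"
proof -
  have "genP = (genP + genQ) - genQ" by simp
  also have "\<dots> \<sim> 1 - genQ" by (rule cm_diff[OF D3]) simp
  finally show ?thesis .
qed
lemma D4: "genP * genQ \<sim> 0"
proof -
  have "genP * genQ \<sim> genP * (1 - genP)" by (rule cm_multL[OF Q_eq])
  also have "genP * (1 - genP) = genP - genP * genP" by (simp add: algebra_simps)
  also have "\<dots> \<sim> genP - genP" by (rule cm_diff[OF _ D1]) simp
  finally show ?thesis by simp
qed
lemma D5: "genQ * genP \<sim> 0"
proof -
  have "genQ * genP \<sim> (1 - genP) * genP" by (rule cm_multR[OF Q_eq])
  also have "(1 - genP) * genP = genP - genP * genP" by (simp add: algebra_simps)
  also have "\<dots> \<sim> genP - genP" by (rule cm_diff[OF _ D1]) simp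
  finally show ?thesis by simp
qed

lemma PK: "genP * gen K \<sim> gen K" using R1 by (simp add: genP_def)
lemma KP: "gen K * genP \<sim> gen K"
proof -
  have "gen K * genP = gen K * (gen K * gen Kb)" by (simp add: genP_def)
  also have "\<dots> \<sim> gen K * (gen Kb * gen K)" by (rule cm_multL[OF R3])
  also have "\<dots> = gen K * gen Kb * gen K" by (simp add: mult.assoc)
  also have "\<dots> \<sim> gen K" by (rule R1)
  finally show ?thesis .
qed
lemma KbP: "gen Kb * genP \<sim> gen Kb"
  using R2 by (simp add: genP_def mult.assoc)
lemma PKb: "genP * gen Kb \<sim> gen Kb"
proof -
  have "genP * gen Kb \<sim> (gen Kb * gen K) * gen Kb" unfolding genP_def by (rule cm_multR[OF R3])
  also have "\<dots> \<sim> gen Kb" by (rule R2)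
  finally show ?thesis .
qed
lemma QL: "genQ * gen L \<sim> gen L" using R4 by (simp add: genQ_def)
lemma LQ: "gen L * genQ \<sim> gen L"
proof -
  have "gen L * genQ = gen L * (gen L * gen Lb)" by (simp add: genQ_def)
  also have "\<dots> \<sim> gen L * (gen Lb * gen L)" by (rule cm_multL[OF R6])
  also have "\<dots> = gen L * gen Lb * gen L" by (simp add: mult.assoc)
  also have "\<dots> \<sim> gen L" by (rule R4)
  finally show ?thesis .
qed
lemma LbQ: "gen Lb * genQ \<sim> gen Lb"
proof -
  have "gen Lb * genQ = gen Lb * gen L * gen Lb" by (simp add: genQ_def mult.assoc)
  also have "\<dots> \<sim> gen Lb" by (rule R5)
  finally show ?thesis .
qed
lemma QLb: "genQ * gen Lb \<sim> gen Lb"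
proof -
  have "genQ * gen Lb \<sim> (gen Lb * gen L) * gen Lb" unfolding genQ_def by (rule cm_multR[OF R6])
  also have "\<dots> \<sim> gen Lb" by (rule R5)
  finally show ?thesis .
qed

lemma orthR: "a \<sim> a * x \<Longrightarrow> x * b \<sim> 0 \<Longrightarrow> a * b \<sim> 0"
proof -
  assume 1: "a \<sim> a * x" and 2: "x * b \<sim> 0"
  have "a * b \<sim> (a * x) * b" by (rule cm_multR[OF 1])
  also have "\<dots> = a * (x * b)" by (simp add: mult.assoc)
  also have "\<dots> \<sim> a * 0" by (rule cm_multL[OF 2])
  finally show ?thesis by simp
qed
lemma orthL: "b \<sim> x * b \<Longrightarrow> a * x \<sim> 0 \<Longrightarrow> a * b \<sim> 0"
proof -
  assume 1: "b \<sim> x * b" and 2: "a * x \<sim> 0"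
  have "a * b \<sim> a * (x * b)" by (rule cm_multL[OF 1])
  also have "\<dots> = (a * x) * b" by (simp add: mult.assoc)
  also have "\<dots> \<sim> 0 * b" by (rule cm_multR[OF 2])
  finally show ?thesis by simp
qed

lemma PL: "genP * gen L \<sim> 0" by (rule orthL[OF cs[OF QL] D4])
lemma PLb: "genP * gen Lb \<sim> 0" by (rule orthL[OF cs[OF QLb] D4])
lemma LP: "gen L * genP \<sim> 0" by (rule orthR[OF cs[OF LQ] D5])
lemma LbP: "gen Lb * genP \<sim> 0" by (rule orthR[OF cs[OF LbQ] D5])
lemma QK: "genQ * gen K \<sim> 0" by (rule orthL[OF cs[OF PK] D5])
lemma QKb: "genQ * gen Kb \<sim> 0" by (rule orthL[OF cs[OF PKb] D5])
lemma KQ: "gen K * genQ \<sim> 0" by (rule orthR[OF cs[OF KP] D4])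
lemma KbQ: "gen Kb * genQ \<sim> 0" by (rule orthR[OF cs[OF KbP] D4])
lemma KL: "gen K * gen L \<sim> 0" by (rule orthR[OF cs[OF KP] PL])
lemma KLb: "gen K * gen Lb \<sim> 0" by (rule orthR[OF cs[OF KP] PLb])
lemma KbL: "gen Kb * gen L \<sim> 0" by (rule orthR[OF cs[OF KbP] PL])
lemma KbLb: "gen Kb * gen Lb \<sim> 0" by (rule orthR[OF cs[OF KbP] PLb])
lemma LK: "gen L * gen K \<sim> 0" by (rule orthR[OF cs[OF LQ] QK])
lemma LKb: "gen L * gen Kb \<sim> 0" by (rule orthR[OF cs[OF LQ] QKb])
lemma LbK: "gen Lb * gen K \<sim> 0" by (rule orthR[OF cs[OF LbQ] QK])
lemma LbKb: "gen Lb * gen Kb \<sim> 0" by (rule orthR[OF cs[OF LbQ] QKb])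

end


definition kt :: "G free" where "kt = gen K + gen L"
definition kbt :: "G free" where "kbt = gen Kb + gen Lb"

lemma sc_pull: "a * (sc c * b) = sc c * (a * b)"
  by (metis mult.assoc sc_comm)
lemma sc_pull2: "a * sc c = sc c * a" by (rule sc_comm[symmetric])

context RM begin

lemma q_nz: "q \<noteq> 0" using qn n_gt1 by (cases "q = 0") (auto simp: power_0_left)
lemma iqq: "inverse q ^ 2 * q ^ 2 = 1" "q ^ 2 * inverse q ^ 2 = 1"
  using q_nz by (simp_all add: power_mult_distrib[symmetric])

lemma P_gen_comm: "genP * gen x \<sim> gen x * genP"
proof (cases x)
  case K then show ?thesis using PK KP by (meson cm_trans cs)
next
  case Kb then show ?thesis using PKb KbP by (meson cm_trans cs)
next
  case L then show ?thesis using PL LP by (meson cm_trans cs)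
next
  case Lb then show ?thesis using PLb LbP by (meson cm_trans cs)
next
  case E
  have "genP * gen E = gen K * (gen Kb * gen E)" by (simp add: genP_def mult.assoc)
  also have "\<dots> \<sim> gen K * (sc (inverse q ^ 2) * gen E * gen Kb)" by (rule cm_multL[OF R10])
  also have "\<dots> = sc (inverse q ^ 2) * ((gen K * gen E) * gen Kb)" by (simp add: sc_pull mult.assoc)
  also have "\<dots> \<sim> sc (inverse q ^ 2) * ((sc (q^2) * gen E * gen K) * gen Kb)" by (intro cm_multL cm_multR R8)
  also have "\<dots> = sc (inverse q ^ 2 * q^2) * (gen E * genP)" by (simp add: sc_mult genP_def mult.assoc)
  also have "\<dots> = gen E * genP" by (simp add: iqq)
  finally show ?thesis using E by simp
next
  case F
  have "genP * gen F = gen K * (gen Kb * gen F)" by (simp add: genP_def mult.assoc)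
  also have "\<dots> \<sim> gen K * (sc (q ^ 2) * gen F * gen Kb)" by (rule cm_multL[OF R14])
  also have "\<dots> = sc (q ^ 2) * ((gen K * gen F) * gen Kb)" by (simp add: sc_pull mult.assoc)
  also have "\<dots> \<sim> sc (q ^ 2) * ((sc (inverse q^2) * gen F * gen K) * gen Kb)" by (intro cm_multL cm_multR R12)
  also have "\<dots> = sc (q ^ 2 * inverse q^2) * (gen F * genP)" by (simp add: sc_mult genP_def mult.assoc)
  also have "\<dots> = gen F * genP" by (simp add: iqq)
  finally show ?thesis using F by simp
qed

lemma P_central: "genP * y \<sim> y * genP"
  by (rule comm_closed) (rule P_gen_comm)

lemma Q_central: "genQ * y \<sim> y * genQ"
proof -
  have "genQ * y \<sim> (1 - genP) * y" by (rule cm_multR[OF Q_eq])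
  also have "\<dots> = y - genP * y" by (simp add: algebra_simps)
  also have "\<dots> \<sim> y - y * genP" by (rule cm_diff[OF _ P_central]) simp
  also have "\<dots> = y * (1 - genP)" by (simp add: algebra_simps)
  also have "\<dots> \<sim> y * genQ" by (rule cm_multL[OF cs[OF Q_eq]])
  finally show ?thesis .
qed

lemma kt_kbt: "kt * kbt \<sim> 1"
proof -
  have "kt * kbt = (genP + genQ) + (gen K * gen Lb + gen L * gen Kb)"
    by (simp add: kt_def kbt_def genP_def genQ_def algebra_simps)
  also have "\<dots> \<sim> 1 + (0 + 0)" by (intro cm_add D3 KLb LKb)
  finally show ?thesis by simp
qed
lemma kbt_kt: "kbt * kt \<sim> 1"
proof -
  have "kbt * kt = (gen Kb * gen K + gen Lb * gen L) + (gen Kb * gen L + gen Lb * gen K)"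
    by (simp add: kt_def kbt_def algebra_simps)
  also have "\<dots> \<sim> (genP + genQ) + (0 + 0)" unfolding genP_def genQ_def by (intro cm_add cs[OF R3] cs[OF R6] KbL LbK)
  also have "\<dots> \<sim> 1 + (0 + 0)" by (intro cm_add D3 cm_refl)
  finally show ?thesis by simp
qed

lemma kt_E: "kt * gen E \<sim> sc (q^2) * gen E * kt"
proof -
  have "kt * gen E = gen K * gen E + gen L * gen E" by (simp add: kt_def algebra_simps)
  also have "\<dots> \<sim> sc (q^2) * gen E * gen K + sc (q^2) * gen E * gen L" by (intro cm_add R8 R9)
  finally show ?thesis by (simp add: kt_def algebra_simps)
qed
lemma kt_F: "kt * gen F \<sim> sc (inverse q^2) * gen F * kt"
proof -
  have "kt * gen F = gen K * gen F + gen L * gen F" by (simp add: kt_def algebra_simps)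
  also have "\<dots> \<sim> sc (inverse q^2) * gen F * gen K + sc (inverse q^2) * gen F * gen L" by (intro cm_add R12 R13)
  finally show ?thesis by (simp add: kt_def algebra_simps)
qed
lemma kbt_E: "kbt * gen E \<sim> sc (inverse q^2) * gen E * kbt"
proof -
  have "kbt * gen E = gen Kb * gen E + gen Lb * gen E" by (simp add: kbt_def algebra_simps)
  also have "\<dots> \<sim> sc (inverse q^2) * gen E * gen Kb + sc (inverse q^2) * gen E * gen Lb" by (intro cm_add R10 R11)
  finally show ?thesis by (simp add: kbt_def algebra_simps)
qed
lemma kbt_F: "kbt * gen F \<sim> sc (q^2) * gen F * kbt"
proof -
  have "kbt * gen F = gen Kb * gen F + gen Lb * gen F" by (simp add: kbt_def algebra_simps)
  also have "\<dots> \<sim> sc (q^2) * gen F * gen Kb + sc (q^2) * gen F * gen Lb" by (intro cm_add R14 R15)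
  finally show ?thesis by (simp add: kbt_def algebra_simps)
qed
lemma EF: "gen E * gen F - gen F * gen E \<sim> sc (inverse (q - inverse q)) * (kt - kbt)"
  using R16 by (simp add: kt_def kbt_def)

lemma Km_L: "m \<ge> 1 \<Longrightarrow> gen K ^ m * gen L \<sim> 0"
proof -
  assume "m \<ge> 1"
  then obtain k where m: "m = Suc k" by (cases m) auto
  have "gen K ^ m * gen L = gen K ^ k * (gen K * gen L)" by (simp add: m power_Suc2 mult.assoc del: power_Suc)
  also have "\<dots> \<sim> gen K ^ k * 0" by (rule cm_multL[OF KL])
  finally show ?thesis by simp
qed
lemma Lm_K: "m \<ge> 1 \<Longrightarrow> gen L ^ m * gen K \<sim> 0"
proof -
  assume "m \<ge> 1"
  then obtain k where m: "m = Suc k" by (cases m) auto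
  have "gen L ^ m * gen K = gen L ^ k * (gen L * gen K)" by (simp add: m power_Suc2 mult.assoc del: power_Suc)
  also have "\<dots> \<sim> gen L ^ k * 0" by (rule cm_multL[OF LK])
  finally show ?thesis by simp
qed

lemma kt_pow_split: "m \<ge> 1 \<Longrightarrow> kt ^ m \<sim> gen K ^ m + gen L ^ m"
proof (induction m rule: dec_induct)
  case base then show ?case by (simp add: kt_def)
next
  case (step m)
  have "kt ^ Suc m = kt ^ m * kt" by (rule power_Suc2)
  also have "\<dots> \<sim> (gen K ^ m + gen L ^ m) * kt" by (rule cm_multR[OF step.IH])
  also have "\<dots> = (gen K ^ Suc m + gen L ^ Suc m) + (gen K ^ m * gen L + gen L ^ m * gen K)"
    by (simp add: kt_def algebra_simps power_commutes)
  also have "\<dots> \<sim> (gen K ^ Suc m + gen L ^ Suc m) + (0 + 0)"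
    by (intro cm_add cm_refl Km_L Lm_K step.hyps)
  finally show ?case by simp
qed

lemma kt_n: "kt ^ n \<sim> 1"
proof -
  have "kt ^ n \<sim> gen K ^ n + gen L ^ n" by (rule kt_pow_split) (use n_gt1 in simp)
  also have "\<dots> \<sim> genP + genQ" unfolding genP_def genQ_def by (intro cm_add RKn RLn)
  also have "\<dots> \<sim> 1" by (rule D3)
  finally show ?thesis .
qed

lemma kbt_pow: "kbt \<sim> kt ^ (n - 1)"
proof -
  have "kbt = kbt * 1" by simp
  also have "\<dots> \<sim> kbt * kt ^ n" by (rule cm_multL[OF cs[OF kt_n]])
  also have "kt ^ n = kt * kt ^ (n - 1)" using n_gt1 by (metis One_nat_def Suc_pred less_trans power_Suc zero_less_one)
  also have "kbt * (kt * kt ^ (n - 1)) = (kbt * kt) * kt ^ (n - 1)" by (simp add: mult.assoc)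
  also have "\<dots> \<sim> 1 * kt ^ (n - 1)" by (rule cm_multR[OF kbt_kt])
  finally show ?thesis by simp
qed

lemma P_kt: "genP * kt \<sim> gen K"
proof -
  have "genP * kt = genP * gen K + genP * gen L" by (simp add: kt_def algebra_simps)
  also have "\<dots> \<sim> gen K + 0" by (intro cm_add PK PL)
  finally show ?thesis by simp
qed
lemma Q_kt: "genQ * kt \<sim> gen L"
proof -
  have "genQ * kt = genQ * gen K + genQ * gen L" by (simp add: kt_def algebra_simps)
  also have "\<dots> \<sim> 0 + gen L" by (intro cm_add QK QL)
  finally show ?thesis by simp
qed

lemma idem_pow: 
  assumes idem: "p * p \<sim> p" and cen: "\<And>y. p * y \<sim> y * p"
  shows "(p * x) ^ Suc m \<sim> p * x ^ Suc m"
proof (induction m)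
  case 0 then show ?case by simp
next
  case (Suc m)
  have "(p * x) ^ Suc (Suc m) = (p * x) ^ Suc m * (p * x)" by (rule power_Suc2)
  also have "\<dots> \<sim> (p * x ^ Suc m) * (p * x)" by (rule cm_multR[OF Suc.IH])
  also have "\<dots> = p * (x ^ Suc m * p) * x" by (simp add: mult.assoc)
  also have "\<dots> \<sim> p * (p * x ^ Suc m) * x" by (intro cm_multL cm_multR cs[OF cen])
  also have "\<dots> = (p * p) * x ^ Suc (Suc m)" by (simp add: mult.assoc power_commutes)
  also have "\<dots> \<sim> p * x ^ Suc (Suc m)" by (rule cm_multR[OF idem])
  finally show ?case .
qed

lemma Kpow_eq: "Kpow genP i \<sim> genP * kt ^ i"
proof (cases i)
  case 0 then show ?thesis by (simp add: Kpow_def)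
next
  case (Suc m)
  have "Kpow genP i = gen K ^ Suc m" by (simp add: Kpow_def Suc)
  also have "\<dots> \<sim> (genP * kt) ^ Suc m" by (rule cm_power[OF cs[OF P_kt]])
  also have "\<dots> \<sim> genP * kt ^ Suc m" by (rule idem_pow[OF D1 P_central])
  finally show ?thesis by (simp add: Suc)
qed
lemma Lpow_eq: "Lpow genQ i \<sim> genQ * kt ^ i"
proof (cases i)
  case 0 then show ?thesis by (simp add: Lpow_def)
next
  case (Suc m)
  have "Lpow genQ i = gen L ^ Suc m" by (simp add: Lpow_def Suc)
  also have "\<dots> \<sim> (genQ * kt) ^ Suc m" by (rule cm_power[OF cs[OF Q_kt]])
  also have "\<dots> \<sim> genQ * kt ^ Suc m" by (rule idem_pow[OF D2 Q_central])
  finally show ?thesis by (simp add: Suc)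
qed

lemma K_eq: "gen K \<sim> genP * kt" by (rule cs[OF P_kt])
lemma L_eq: "gen L \<sim> genQ * kt" by (rule cs[OF Q_kt])
lemma Kb_eq: "gen Kb \<sim> genP * kbt"
proof -
  have "genP * kbt = genP * gen Kb + genP * gen Lb" by (simp add: kbt_def algebra_simps)
  also have "\<dots> \<sim> gen Kb + 0" by (intro cm_add PKb PLb)
  finally show ?thesis by (simp add: cs)
qed
lemma Lb_eq: "gen Lb \<sim> genQ * kbt"
proof -
  have "genQ * kbt = genQ * gen Kb + genQ * gen Lb" by (simp add: kbt_def algebra_simps)
  also have "\<dots> \<sim> 0 + gen Lb" by (intro cm_add QKb QLb)
  finally show ?thesis by (simp add: cs)
qed

end


definition smul :: "complex \<Rightarrow> 'g free \<Rightarrow> 'g free" where "smul c x = sc c * x"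

lemma smul_left: "smul c a * b = smul c (a * b)" by (simp add: smul_def mult.assoc)
lemma smul_right: "a * smul c b = smul c (a * b)" unfolding smul_def by (rule sc_pull)
lemma smul_smul: "smul c (smul d a) = smul (c * d) a" by (simp add: smul_def sc_mult mult.assoc)
lemma sc_times: "sc c * a = smul c a" by (simp add: smul_def)
lemma times_sc: "a * sc c = smul c a" unfolding smul_def by (rule sc_comm[symmetric])
lemma smul_sc: "smul c (sc d) = sc (c * d)" by (simp add: smul_def sc_mult)
lemma smul_1: "smul 1 a = a" by (simp add: smul_def)
lemma smul_0: "smul 0 a = 0" by (simp add: smul_def)
lemma smul_zero: "smul c 0 = 0" by (simp add: smul_def)
lemma smul_add: "smul c (a + b) = smul c a + smul c b" by (simp add: smul_def algebra_simps)
lemma smul_diff: "smul c (a - b) = smul c a - smul c b" by (simp add: smul_def algebra_simps)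
lemma smul_minus: "smul c (- a) = - smul c a" by (simp add: smul_def algebra_simps)
lemma add_smul: "smul (c + d) a = smul c a + smul d a" by (simp add: smul_def sc_add algebra_simps)
lemma diff_smul: "smul (c - d) a = smul c a - smul d a" by (simp add: smul_def sc_diff algebra_simps)
lemma smul_sum: "smul c (sum g A) = (\<Sum>x\<in>A. smul c (g x))" by (simp add: smul_def sum_distrib_left)
lemma sum_smul: "smul (sum g A) a = (\<Sum>x\<in>A. smul (g x) a)"
  by (induction A rule: infinite_finite_induct) (simp_all add: add_smul smul_0)
lemma rename_smul: "rename f (smul c x) = smul c (rename f x)" by (simp add: smul_def)
lemma cm_smul: "cong_mod S x y \<Longrightarrow> cong_mod S (smul c x) (smul c y)" unfolding smul_def by (rule cm_multL)
declare smul_left[simp] smul_right[simp] smul_smul[simp] sc_times[simp] times_sc[simp] smul_sc[simp]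
  smul_1[simp] smul_0[simp] smul_zero[simp] rename_smul[simp]

lemma smul_eqI: "c = d \<Longrightarrow> smul c a = smul d a" by simp

lemma qcomm_1:
  assumes "cong_mod S (a * b) (smul c (b * a))"
  shows "cong_mod S (a * b ^ m) (smul (c ^ m) (b ^ m * a))"
proof (induction m)
  case 0 then show ?case by simp
next
  case (Suc m)
  have "a * b ^ Suc m = (a * b ^ m) * b" by (simp add: power_Suc2 mult.assoc del: power_Suc)
  also have "cong_mod S \<dots> (smul (c ^ m) (b ^ m * a) * b)" by (rule cm_multR[OF Suc.IH])
  also have "\<dots> = smul (c ^ m) (b ^ m * (a * b))" by (simp add: mult.assoc)
  also have "cong_mod S \<dots> (smul (c ^ m) (b ^ m * smul c (b * a)))" by (intro cm_smul cm_multL assms)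
  also have "\<dots> = smul (c ^ Suc m) (b ^ Suc m * a)" by (simp add: mult.assoc power_Suc2 mult.commute del: power_Suc)
  finally show ?case .
qed

lemma qcomm_pow:
  assumes "cong_mod S (a * b) (smul c (b * a))"
  shows "cong_mod S (a ^ i * b ^ m) (smul (c ^ (i * m)) (b ^ m * a ^ i))"
proof (induction i)
  case 0 then show ?case by simp
next
  case (Suc i)
  have "a ^ Suc i * b ^ m = a * (a ^ i * b ^ m)" by (simp add: mult.assoc)
  also have "cong_mod S \<dots> (a * smul (c ^ (i * m)) (b ^ m * a ^ i))" by (rule cm_multL[OF Suc.IH])
  also have "\<dots> = smul (c ^ (i * m)) ((a * b ^ m) * a ^ i)" by (simp add: mult.assoc)
  also have "cong_mod S \<dots> (smul (c ^ (i * m)) (smul (c ^ m) (b ^ m * a) * a ^ i))"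
    by (intro cm_smul cm_multR qcomm_1 assms)
  also have "\<dots> = smul (c ^ (Suc i * m)) (b ^ m * a ^ Suc i)" by (simp add: mult.assoc power_add mult.commute)
  finally show ?case .
qed

context RM begin

lemma d_nz: "q - inverse q \<noteq> 0"
proof
  assume "q - inverse q = 0"
  then have "q * q = 1" using q_nz by (simp add: field_simps)
  then have "q ^ 2 = 1" by (simp add: power2_eq_square)
  moreover have "2 < n" using odd_n n_gt1 by (metis Suc_1 Suc_lessI dvd_refl)
  ultimately show False using prim by auto
qed

lemma qint_1: "qint q 1 = 1" using d_nz by (simp add: qint_def)
lemma qint_0: "qint q 0 = 0" by (simp add: qint_def)
lemma qint_mul: "qint q m * (q - inverse q) = q ^ m - inverse q ^ m"
  using d_nz by (simp add: qint_def)
lemma qint_Suc1: "qint q (Suc m) = q * qint q m + inverse q ^ m"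
proof -
  have "(q * qint q m + inverse q ^ m) * (q - inverse q) = q * (qint q m * (q - inverse q)) + (inverse q ^ m * q - inverse q ^ m * inverse q)"
    by (simp add: algebra_simps)
  also have "\<dots> = q * (q^m - inverse q^m) + (inverse q^m * q - inverse q ^ m * inverse q)" by (simp only: qint_mul)
  also have "\<dots> = q ^ Suc m - inverse q ^ Suc m" by (simp add: algebra_simps)
  also have "\<dots> = qint q (Suc m) * (q - inverse q)" by (rule qint_mul[symmetric])
  finally show ?thesis using d_nz by simp
qed
lemma qint_Suc2: "qint q (Suc m) = inverse q * qint q m + q ^ m"
proof -
  have qi: "inverse q * q = 1" using q_nz by simp
  have "(inverse q * qint q m + q ^ m) * (q - inverse q) = inverse q * (qint q m * (q - inverse q)) + (q ^ m * q - q ^ m * inverse q)"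
    by (simp add: algebra_simps)
  also have "\<dots> = inverse q * (q^m - inverse q^m) + (q^m * q - q ^ m * inverse q)" by (simp only: qint_mul)
  also have "\<dots> = q ^ Suc m - inverse q ^ Suc m" by (simp add: algebra_simps)
  also have "\<dots> = qint q (Suc m) * (q - inverse q)" by (rule qint_mul[symmetric])
  finally show ?thesis using d_nz by simp
qed

lemma kt_E': "kt * gen E \<sim> smul (q^2) (gen E * kt)" using kt_E by simp
lemma kt_F': "kt * gen F \<sim> smul (inverse q^2) (gen F * kt)" using kt_F by simp
lemma kbt_E': "kbt * gen E \<sim> smul (inverse q^2) (gen E * kbt)" using kbt_E by simp
lemma kbt_F': "kbt * gen F \<sim> smul (q^2) (gen F * kbt)" using kbt_F by simp
lemma EF': "gen E * gen F - gen F * gen E \<sim> smul (inverse (q - inverse q)) (kt - kbt)" using EF by simp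

lemma ktE_pow: "kt ^ i * gen E ^ m \<sim> smul (q ^ (2 * i * m)) (gen E ^ m * kt ^ i)"
  using qcomm_pow[OF kt_E', of i m] by (simp only: power_mult[symmetric] mult.assoc mult_1 power_one_right)
lemma ktF_pow: "kt ^ i * gen F ^ m \<sim> smul (inverse q ^ (2 * i * m)) (gen F ^ m * kt ^ i)"
  using qcomm_pow[OF kt_F', of i m] by (simp only: power_mult[symmetric] mult.assoc mult_1 power_one_right)
lemma kbtE_pow: "kbt * gen E ^ m \<sim> smul (inverse q ^ (2 * m)) (gen E ^ m * kbt)"
  using qcomm_pow[OF kbt_E', of 1 m] by (simp only: power_mult[symmetric] mult.assoc mult_1 power_one_right)
lemma kbtF_pow: "kbt * gen F ^ m \<sim> smul (q ^ (2 * m)) (gen F ^ m * kbt)"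
  using qcomm_pow[OF kbt_F', of 1 m] by (simp only: power_mult[symmetric] mult.assoc mult_1 power_one_right)

end

context RM begin

lemma CF: "gen E * gen F ^ Suc m - gen F ^ Suc m * gen E \<sim>
   smul (qint q (Suc m) / (q - inverse q)) (gen F ^ m * (smul (inverse q ^ m) kt - smul (q ^ m) kbt))"
proof (induction m)
  case 0 then show ?case using EF' qint_1[unfolded One_nat_def] by (simp add: divide_inverse)
next
  case (Suc m)
  let ?e = "gen E" and ?f = "gen F" and ?d = "q - inverse q" and ?iq = "inverse q"
  let ?c = "qint q (Suc m) / ?d"
  have "?e * ?f ^ Suc (Suc m) - ?f ^ Suc (Suc m) * ?e = (?e * ?f ^ Suc m - ?f ^ Suc m * ?e) * ?f + ?f ^ Suc m * (?e * ?f - ?f * ?e)"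
    by (simp add: algebra_simps power_Suc2 del: power_Suc)
  also have "\<dots> \<sim> smul ?c (?f ^ m * (smul (?iq ^ m) kt - smul (q ^ m) kbt)) * ?f + ?f ^ Suc m * smul (inverse ?d) (kt - kbt)"
    by (intro cm_add cm_multR cm_multL Suc.IH EF')
  also have "\<dots> = smul (?c * ?iq ^ m) (?f ^ m * (kt * ?f)) - smul (?c * q ^ m) (?f ^ m * (kbt * ?f))
        + (smul (inverse ?d) (?f ^ Suc m * kt) - smul (inverse ?d) (?f ^ Suc m * kbt))"
    by (simp add: smul_diff right_diff_distrib left_diff_distrib mult.assoc)
  also have "\<dots> \<sim> smul (?c * ?iq ^ m) (?f ^ m * smul (?iq^2) (?f * kt)) - smul (?c * q ^ m) (?f ^ m * smul (q^2) (?f * kbt))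
        + (smul (inverse ?d) (?f ^ Suc m * kt) - smul (inverse ?d) (?f ^ Suc m * kbt))"
    by (intro cm_add cm_diff cm_smul cm_multL kt_F' kbt_F' cm_refl)
  also have "\<dots> = smul (?c * ?iq ^ m * ?iq^2 + inverse ?d) (?f ^ Suc m * kt) - smul (?c * q ^ m * q^2 + inverse ?d) (?f ^ Suc m * kbt)"
    by (simp add: add_smul mult.assoc power_Suc2 del: power_Suc)
  also have "?c * ?iq ^ m * ?iq^2 + inverse ?d = qint q (Suc (Suc m)) / ?d * ?iq ^ Suc m"
  proof -
    have qi: "(inverse q * q) ^ Suc m = 1" using q_nz by simp
    have "qint q (Suc (Suc m)) * ?iq ^ Suc m = qint q (Suc m) * (?iq ^ m * ?iq^2) + (inverse q * q) ^ Suc m"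
      by (subst qint_Suc2) (simp add: algebra_simps power_mult_distrib power2_eq_square)
    then have H: "qint q (Suc (Suc m)) * ?iq ^ Suc m = qint q (Suc m) * (?iq ^ m * ?iq^2) + 1" by (simp only: qi)
    have "?c * ?iq ^ m * ?iq^2 + inverse ?d = (qint q (Suc m) * (?iq ^ m * ?iq^2) + 1) * inverse ?d"
      by (simp add: divide_inverse algebra_simps)
    also have "\<dots> = qint q (Suc (Suc m)) * ?iq ^ Suc m * inverse ?d" by (simp only: H)
    finally show ?thesis by (simp add: divide_inverse algebra_simps)
  qed
  also have "?c * q ^ m * q^2 + inverse ?d = qint q (Suc (Suc m)) / ?d * q ^ Suc m"
  proof -
    have qi: "(inverse q * q) ^ Suc m = 1" using q_nz by simp
    have "qint q (Suc (Suc m)) * q ^ Suc m = qint q (Suc m) * (q ^ m * q^2) + (inverse q * q) ^ Suc m"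
      by (subst qint_Suc1) (simp add: algebra_simps power_mult_distrib power2_eq_square)
    then have H: "qint q (Suc (Suc m)) * q ^ Suc m = qint q (Suc m) * (q ^ m * q^2) + 1" by (simp only: qi)
    have "?c * q ^ m * q^2 + inverse ?d = (qint q (Suc m) * (q ^ m * q^2) + 1) * inverse ?d"
      by (simp add: divide_inverse algebra_simps)
    also have "\<dots> = qint q (Suc (Suc m)) * q ^ Suc m * inverse ?d" by (simp only: H)
    finally show ?thesis by (simp add: divide_inverse algebra_simps)
  qed
  also have "smul (qint q (Suc (Suc m)) / ?d * ?iq ^ Suc m) (?f ^ Suc m * kt) - smul (qint q (Suc (Suc m)) / ?d * q ^ Suc m) (?f ^ Suc m * kbt)
     = smul (qint q (Suc (Suc m)) / ?d) (?f ^ Suc m * (smul (?iq ^ Suc m) kt - smul (q ^ Suc m) kbt))"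
    by (simp add: smul_diff right_diff_distrib)
  finally show ?case .
qed

lemma CE: "gen E ^ Suc m * gen F - gen F * gen E ^ Suc m \<sim>
   smul (qint q (Suc m) / (q - inverse q)) (gen E ^ m * (smul (q ^ m) kt - smul (inverse q ^ m) kbt))"
proof (induction m)
  case 0 then show ?case using EF' qint_1[unfolded One_nat_def] by (simp add: divide_inverse)
next
  case (Suc m)
  let ?e = "gen E" and ?f = "gen F" and ?d = "q - inverse q" and ?iq = "inverse q"
  let ?c = "qint q (Suc m) / ?d"
  have "?e ^ Suc (Suc m) * ?f - ?f * ?e ^ Suc (Suc m) = ?e * (?e ^ Suc m * ?f - ?f * ?e ^ Suc m) + (?e * ?f - ?f * ?e) * ?e ^ Suc m"
    by (simp add: algebra_simps del: power_Suc) (simp add: mult.assoc)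
  also have "\<dots> \<sim> ?e * smul ?c (?e ^ m * (smul (q ^ m) kt - smul (?iq ^ m) kbt)) + smul (inverse ?d) (kt - kbt) * ?e ^ Suc m"
    by (intro cm_add cm_multR cm_multL Suc.IH EF')
  also have "\<dots> = smul (?c * q ^ m) (?e ^ Suc m * kt) - smul (?c * ?iq ^ m) (?e ^ Suc m * kbt)
        + (smul (inverse ?d) (kt * ?e ^ Suc m) - smul (inverse ?d) (kbt * ?e ^ Suc m))"
    by (simp add: smul_diff right_diff_distrib left_diff_distrib mult.assoc del: power_Suc) (simp add: mult.assoc[symmetric])
  also have "\<dots> \<sim> smul (?c * q ^ m) (?e ^ Suc m * kt) - smul (?c * ?iq ^ m) (?e ^ Suc m * kbt)
        + (smul (inverse ?d) (smul (q ^ (2 * Suc m)) (?e ^ Suc m * kt)) - smul (inverse ?d) (smul (?iq ^ (2 * Suc m)) (?e ^ Suc m * kbt)))"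
    using ktE_pow[of 1 "Suc m"] kbtE_pow[of "Suc m"]
    by (intro cm_add cm_diff cm_smul cm_refl) simp_all
  also have "\<dots> = smul (?c * q ^ m + inverse ?d * q ^ (2 * Suc m)) (?e ^ Suc m * kt) - smul (?c * ?iq ^ m + inverse ?d * ?iq ^ (2 * Suc m)) (?e ^ Suc m * kbt)"
    by (simp add: add_smul del: power_Suc)
  also have "?c * q ^ m + inverse ?d * q ^ (2 * Suc m) = qint q (Suc (Suc m)) / ?d * q ^ Suc m"
  proof -
    have qi: "inverse q * q = 1" using q_nz by simp
    have "qint q (Suc (Suc m)) * q ^ Suc m = qint q (Suc m) * q ^ m * (inverse q * q) + q ^ Suc m * q ^ Suc m"
      by (subst qint_Suc2) (simp add: algebra_simps)
    then have H: "qint q (Suc (Suc m)) * q ^ Suc m = qint q (Suc m) * q ^ m + q ^ (2 * Suc m)"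
      by (simp only: qi mult_1_right) (simp add: power_add[symmetric] mult_2)
    have "?c * q ^ m + inverse ?d * q ^ (2 * Suc m) = (qint q (Suc m) * q ^ m + q ^ (2 * Suc m)) * inverse ?d"
      by (simp add: divide_inverse algebra_simps del: power_Suc)
    also have "\<dots> = qint q (Suc (Suc m)) * q ^ Suc m * inverse ?d" by (simp only: H)
    finally show ?thesis by (simp add: divide_inverse algebra_simps del: power_Suc)
  qed
  also have "?c * ?iq ^ m + inverse ?d * ?iq ^ (2 * Suc m) = qint q (Suc (Suc m)) / ?d * ?iq ^ Suc m"
  proof -
    have qi: "q * inverse q = 1" using q_nz by simp
    have "qint q (Suc (Suc m)) * ?iq ^ Suc m = qint q (Suc m) * ?iq ^ m * (q * inverse q) + ?iq ^ Suc m * ?iq ^ Suc m"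
      by (subst qint_Suc1) (simp add: algebra_simps)
    then have H: "qint q (Suc (Suc m)) * ?iq ^ Suc m = qint q (Suc m) * ?iq ^ m + ?iq ^ (2 * Suc m)"
      by (simp only: qi mult_1_right) (simp add: power_add[symmetric] mult_2)
    have "?c * ?iq ^ m + inverse ?d * ?iq ^ (2 * Suc m) = (qint q (Suc m) * ?iq ^ m + ?iq ^ (2 * Suc m)) * inverse ?d"
      by (simp add: divide_inverse algebra_simps del: power_Suc)
    also have "\<dots> = qint q (Suc (Suc m)) * ?iq ^ Suc m * inverse ?d" by (simp only: H)
    finally show ?thesis by (simp add: divide_inverse algebra_simps del: power_Suc)
  qed
  also have "smul (qint q (Suc (Suc m)) / ?d * q ^ Suc m) (?e ^ Suc m * kt) - smul (qint q (Suc (Suc m)) / ?d * ?iq ^ Suc m) (?e ^ Suc m * kbt)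
     = smul (qint q (Suc (Suc m)) / ?d) (?e ^ Suc m * (smul (q ^ Suc m) kt - smul (?iq ^ Suc m) kbt))"
    by (simp add: smul_diff right_diff_distrib del: power_Suc)
  finally show ?case .
qed

end


definition T :: "G free \<Rightarrow> G free \<Rightarrow> (G + G) free" where
  "T a b = rename Inl a * rename Inr b"

lemma T_add1: "T (a + b) c = T a c + T b c" by (simp add: T_def algebra_simps)
lemma T_add2: "T a (b + c) = T a b + T a c" by (simp add: T_def algebra_simps)
lemma T_diff1: "T (a - b) c = T a c - T b c" by (simp add: T_def algebra_simps)
lemma T_diff2: "T a (b - c) = T a b - T a c" by (simp add: T_def algebra_simps)
lemma T_smul1: "T (smul c a) b = smul c (T a b)" by (simp add: T_def)
lemma T_smul2: "T a (smul c b) = smul c (T a b)" by (simp add: T_def)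
lemma T_sum1: "T (sum g A) b = (\<Sum>x\<in>A. T (g x) b)" by (simp add: T_def sum_distrib_right)
lemma T_sum2: "T a (sum g A) = (\<Sum>x\<in>A. T a (g x))" by (simp add: T_def sum_distrib_left)
lemma T_0_1[simp]: "T 0 b = 0" by (simp add: T_def)
lemma T_0_2[simp]: "T a 0 = 0" by (simp add: T_def)
lemma T_11[simp]: "T 1 1 = 1" by (simp add: T_def)
lemma T_gl: "gen (Inl x) = T (gen x) 1" by (simp add: T_def)
lemma T_gr: "gen (Inr x) = T 1 (gen x)" by (simp add: T_def)
lemmas T_lin = T_add1 T_add2 T_diff1 T_diff2 T_smul1 T_smul2

context RM begin

abbreviation ceq2 (infix "\<approx>" 50) where "x \<approx> y \<equiv> cong_mod (rels_tensor q n) x y"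

lemma T_mult: "T a b * T c d \<approx> T (a * c) (b * d)"
proof -
  have "T a b * T c d = rename Inl a * (rename Inr b * rename Inl c) * rename Inr d" by (simp add: T_def mult.assoc)
  also have "\<dots> \<approx> rename Inl a * (rename Inl c * rename Inr b) * rename Inr d"
    by (intro cm_multL cm_multR cm_sym[OF lr_comm])
  also have "\<dots> = T (a * c) (b * d)" by (simp add: T_def mult.assoc)
  finally show ?thesis .
qed

lemma T_cong: "a \<sim> a' \<Longrightarrow> b \<sim> b' \<Longrightarrow> T a b \<approx> T a' b'"
  unfolding T_def by (intro cm_mult cm_lift_l cm_lift_r)

lemma T_cong1: "a \<sim> a' \<Longrightarrow> T a b \<approx> T a' b" by (rule T_cong) auto
lemma T_cong2: "b \<sim> b' \<Longrightarrow> T a b \<approx> T a b'" by (rule T_cong) auto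

lemma T_central:
  assumes a: "\<And>y. a * y \<sim> y * a" and b: "\<And>y. b * y \<sim> y * b"
  shows "T a b * z \<approx> z * T a b"
proof (rule comm_closed)
  fix g :: "G + G"
  show "T a b * gen g \<approx> gen g * T a b"
  proof (cases g)
    case (Inl x)
    have "T a b * gen g = T a b * T (gen x) 1" by (simp add: Inl T_gl)
    also have "\<dots> \<approx> T (a * gen x) (b * 1)" by (rule T_mult)
    also have "\<dots> \<approx> T (gen x * a) (1 * b)" by (rule T_cong) (use a in auto)
    also have "\<dots> \<approx> T (gen x) 1 * T a b" by (rule cm_sym[OF T_mult])
    finally show ?thesis by (simp add: Inl T_gl)
  next
    case (Inr x)
    have "T a b * gen g = T a b * T 1 (gen x)" by (simp add: Inr T_gr)
    also have "\<dots> \<approx> T (a * 1) (b * gen x)" by (rule T_mult)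
    also have "\<dots> \<approx> T (1 * a) (gen x * b)" by (rule T_cong) (use b in auto)
    also have "\<dots> \<approx> T 1 (gen x) * T a b" by (rule cm_sym[OF T_mult])
    finally show ?thesis by (simp add: Inr T_gr)
  qed
qed

definition commutes :: "(G + G) free \<Rightarrow> (G + G) free \<Rightarrow> bool" where
  "commutes z y \<longleftrightarrow> z * y \<approx> y * z"

lemma commutes_mult: "commutes z a \<Longrightarrow> commutes z b \<Longrightarrow> commutes z (a * b)"
proof -
  assume a: "commutes z a" and b: "commutes z b"
  have "z * (a * b) = (z * a) * b" by (simp add: mult.assoc)
  also have "\<dots> \<approx> (a * z) * b" using a by (intro cm_multR) (simp add: commutes_def)
  also have "\<dots> = a * (z * b)" by (simp add: mult.assoc)
  also have "\<dots> \<approx> a * (b * z)" using b by (intro cm_multL) (simp add: commutes_def)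
  finally show ?thesis by (simp add: commutes_def mult.assoc)
qed
lemma commutes_add: "commutes z a \<Longrightarrow> commutes z b \<Longrightarrow> commutes z (a + b)"
  by (simp add: commutes_def distrib_left distrib_right cm_add)
lemma commutes_smul: "commutes z a \<Longrightarrow> commutes z (smul c a)"
  by (simp add: commutes_def cm_smul)
lemma commutes_sum: "(\<And>i. i \<in> A \<Longrightarrow> commutes z (g i)) \<Longrightarrow> commutes z (sum g A)"
  by (induction A rule: infinite_finite_induct) (auto simp: commutes_def intro: commutes_add[unfolded commutes_def])
lemma commutes_power: "commutes z a \<Longrightarrow> commutes z (a ^ m)"
proof (induction m)
  case 0 then show ?case by (simp add: commutes_def)
next
  case (Suc m) show ?case unfolding power_Suc by (rule commutes_mult[OF Suc.prems Suc.IH[OF Suc.prems]])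
qed
lemma commutes_sym: "commutes z a \<Longrightarrow> commutes a z"
  by (simp add: commutes_def cm_sym)
lemma commutes_cong: "commutes z a \<Longrightarrow> a \<approx> a' \<Longrightarrow> commutes z a'"
proof -
  assume h: "commutes z a" "a \<approx> a'"
  have "z * a' \<approx> z * a" by (rule cm_multL[OF cm_sym[OF h(2)]])
  also have "\<dots> \<approx> a * z" using h(1) by (simp add: commutes_def)
  also have "\<dots> \<approx> a' * z" by (rule cm_multR[OF h(2)])
  finally show ?thesis by (simp add: commutes_def)
qed
lemma commutes_1: "commutes z 1" by (simp add: commutes_def)
lemma commutes_mult1: "commutes a z \<Longrightarrow> commutes b z \<Longrightarrow> commutes (a * b) z"
  using commutes_mult commutes_sym by blast

end


lemma sum_shift1:
  assumes "cong_mod S (g N) (g 0)"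
  shows "cong_mod S (\<Sum>i<N. g (Suc i)) (\<Sum>i<N. g i)"
proof -
  have "(\<Sum>i<N. g (Suc i)) = (\<Sum>i<N. g i) + g N - g 0"
    using sum.lessThan_Suc_shift[of g N] sum.lessThan_Suc[of g N] by (simp add: algebra_simps)
  also have "cong_mod S \<dots> ((\<Sum>i<N. g i) + g 0 - g 0)" by (intro cm_diff cm_add assms cm_refl)
  finally show ?thesis by simp
qed

lemma sum_shift_periodic:
  fixes N c :: nat
  assumes "\<And>j. cong_mod S (g (j + N)) (g j)"
  shows "cong_mod S (\<Sum>j<N. g (j + c)) (\<Sum>j<N. g j)"
proof (induction c)
  case 0 then show ?case by simp
next
  case (Suc c)
  have "(\<Sum>j<N. g (j + Suc c)) = (\<Sum>j<N. (\<lambda>j. g (j + c)) (Suc j))" by simp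
  also have "cong_mod S \<dots> (\<Sum>j<N. g (j + c))"
    by (rule sum_shift1) (use assms[of c] in \<open>simp add: add.commute\<close>)
  also have "cong_mod S \<dots> (\<Sum>j<N. g j)" by (rule Suc.IH)
  finally show ?case .
qed

lemma pow_mod_n: "(x::complex) ^ N = 1 \<Longrightarrow> x ^ a = x ^ (a mod N)"
proof -
  assume h: "x ^ N = 1"
  have "x ^ a = x ^ (N * (a div N) + a mod N)" by (metis mult.commute div_mult_mod_eq)
  also have "\<dots> = x ^ (a mod N)" by (simp only: power_add power_mult h power_one mult_1)
  finally show ?thesis .
qed

lemma char_sum: "(x::complex) ^ N = 1 \<Longrightarrow> (\<Sum>k<N. x ^ k) = (if x = 1 then of_nat N else 0)"
  by (auto simp: geometric_sum)

context RM begin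

lemma iq_n: "inverse q ^ n = 1" by (simp add: power_inverse qn)

lemma q_pow_1: "q ^ a = 1 \<Longrightarrow> n dvd a"
proof (rule ccontr)
  assume h: "q ^ a = 1" "\<not> n dvd a"
  have "q ^ (a mod n) = 1" using h pow_mod_n[OF qn] by simp
  moreover have "0 < a mod n" "a mod n < n" using h n_gt1 by (auto simp: mod_greater_zero_iff_not_dvd)
  ultimately show False using prim by blast
qed

lemma q2_pow_1: "q ^ (2 * a) = 1 \<Longrightarrow> n dvd a"
proof -
  assume "q ^ (2 * a) = 1"
  then have "n dvd 2 * a" by (rule q_pow_1)
  moreover have "coprime n 2" using odd_n by (simp add: coprime_commute)
  ultimately show ?thesis using coprime_dvd_mult_right_iff by blast
qed

lemma q2_ne: "a < n \<Longrightarrow> b < n \<Longrightarrow> a \<noteq> b \<Longrightarrow> q ^ (2 * a) * inverse q ^ (2 * b) \<noteq> 1"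
proof
  assume ab: "a < n" "b < n" "a \<noteq> b" and h: "q ^ (2 * a) * inverse q ^ (2 * b) = 1"
  then have eq: "q ^ (2 * a) = q ^ (2 * b)" using q_nz by (simp add: field_simps power_inverse)
  show False
  proof (cases "a < b")
    case True
    have e: "2 * b = 2 * a + 2 * (b - a)" using True by simp
    have "q ^ (2 * b) = q ^ (2 * a) * q ^ (2 * (b - a))" by (subst e) (simp only: power_add)
    then have "q ^ (2 * (b - a)) = 1" using eq q_nz by simp
    then have "n dvd (b - a)" by (rule q2_pow_1)
    then have "n \<le> b - a" using True by (simp add: dvd_imp_le)
    then show False using ab by linarith
  next
    case False
    then have ba: "b < a" using ab by simp
    have e: "2 * a = 2 * b + 2 * (a - b)" using ba by simp
    have "q ^ (2 * a) = q ^ (2 * b) * q ^ (2 * (a - b))" by (subst e) (simp only: power_add)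
    then have "q ^ (2 * (a - b)) = 1" using eq q_nz by simp
    then have "n dvd (a - b)" by (rule q2_pow_1)
    then have "n \<le> a - b" using ba by (simp add: dvd_imp_le)
    then show False using ab by linarith
  qed
qed

end


definition pim :: "complex \<Rightarrow> nat \<Rightarrow> nat \<Rightarrow> G free" where
  "pim q n j = smul (1 / of_nat n) (\<Sum>i<n. smul (inverse q ^ (2 * i * j)) (kt ^ i))"

context RM begin

abbreviation pi where "pi j \<equiv> pim q n j"

lemma pi_periodic: "pi (j + n) = pi j"
proof -
  have "inverse q ^ (2 * i * (j + n)) = inverse q ^ (2 * i * j)" for i
  proof -
    have "inverse q ^ (2 * i * (j + n)) = inverse q ^ (2 * i * j) * (inverse q ^ n) ^ (2 * i)"
      by (simp add: algebra_simps power_add power_mult[symmetric])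
    then show ?thesis by (simp add: iq_n)
  qed
  then show ?thesis by (simp add: pim_def)
qed

lemma iq_q: "inverse q ^ k * q ^ k = 1" "q ^ k * inverse q ^ k = 1"
  using q_nz by (simp_all add: power_mult_distrib[symmetric])

lemma kt_pi: "kt * pi j \<sim> smul (q ^ (2 * j)) (pi j)"
proof -
  let ?g = "\<lambda>i. smul (q ^ (2 * j) * inverse q ^ (2 * i * j)) (kt ^ i)"
  have "kt * pi j = smul (1 / of_nat n) (\<Sum>i<n. ?g (Suc i))"
  proof -
    have "?g (Suc i) = smul (inverse q ^ (2 * i * j)) (kt ^ Suc i)" for i
    proof -
      have e: "2 * Suc i * j = 2 * i * j + 2 * j" by simp
      have "q ^ (2 * j) * inverse q ^ (2 * Suc i * j) = inverse q ^ (2 * i * j) * (inverse q ^ (2*j) * q ^ (2 * j))"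
        unfolding e power_add by (simp only: mult_ac)
      then show ?thesis by (simp add: iq_q)
    qed
    then show ?thesis by (simp add: pim_def smul_sum sum_distrib_left)
  qed
  also have "\<dots> \<sim> smul (1 / of_nat n) (\<Sum>i<n. ?g i)"
  proof (intro cm_smul sum_shift1)
    have "?g n = smul (q ^ (2 * j) * (inverse q ^ n) ^ (2 * j)) (kt ^ n)"
      by (simp add: power_mult[symmetric] algebra_simps)
    also have "\<dots> = smul (q ^ (2 * j)) (kt ^ n)" by (simp add: iq_n)
    also have "\<dots> \<sim> smul (q ^ (2 * j)) 1" by (intro cm_smul kt_n)
    finally show "?g n \<sim> ?g 0" by simp
  qed
  also have "\<dots> = smul (q ^ (2 * j)) (pi j)" by (simp add: pim_def smul_sum mult.commute)
  finally show ?thesis .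
qed

lemma pi_kt_comm: "pi j * kt = kt * pi j"
  by (simp add: pim_def sum_distrib_left sum_distrib_right power_commutes)

lemma kt_pow_pi: "kt ^ k * pi j \<sim> smul (q ^ (2 * j * k)) (pi j)"
proof (induction k)
  case 0 then show ?case by simp
next
  case (Suc k)
  have "kt ^ Suc k * pi j = kt * (kt ^ k * pi j)" by (simp add: mult.assoc)
  also have "\<dots> \<sim> kt * smul (q ^ (2 * j * k)) (pi j)" by (rule cm_multL[OF Suc.IH])
  also have "\<dots> = smul (q ^ (2 * j * k)) (kt * pi j)" by simp
  also have "\<dots> \<sim> smul (q ^ (2 * j * k)) (smul (q ^ (2 * j)) (pi j))" by (intro cm_smul kt_pi)
  also have "\<dots> = smul (q ^ (2 * j * Suc k)) (pi j)" by (simp add: power_add mult.commute)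
  finally show ?case .
qed

lemma pi_kt_pow_comm: "pi j * kt ^ k = kt ^ k * pi j"
proof (induction k)
  case 0 then show ?case by simp
next
  case (Suc k)
  have "pi j * kt ^ Suc k = (pi j * kt) * kt ^ k" by (simp add: mult.assoc)
  also have "\<dots> = kt * (pi j * kt ^ k)" by (simp only: pi_kt_comm mult.assoc)
  also have "\<dots> = kt ^ Suc k * pi j" by (simp add: Suc.IH mult.assoc)
  finally show ?case .
qed

lemma pi_kt_pow: "pi j * kt ^ k \<sim> smul (q ^ (2 * j * k)) (pi j)"
  using kt_pow_pi by (simp add: pi_kt_pow_comm)

lemma E_kt_pow: "gen E * kt ^ i \<sim> smul (inverse q ^ (2 * i)) (kt ^ i * gen E)"
proof -
  have "gen E * kt ^ i = smul (inverse q ^ (2 * i)) (smul (q ^ (2 * i)) (gen E * kt ^ i))"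
    by (simp add: iq_q)
  also have "\<dots> \<sim> smul (inverse q ^ (2 * i)) (kt ^ i * gen E)"
    by (rule cm_smul, rule cm_sym) (use ktE_pow[of i 1] in simp)
  finally show ?thesis .
qed

lemma F_kt_pow: "gen F * kt ^ i \<sim> smul (q ^ (2 * i)) (kt ^ i * gen F)"
proof -
  have "gen F * kt ^ i = smul (q ^ (2 * i)) (smul (inverse q ^ (2 * i)) (gen F * kt ^ i))"
    by (simp add: iq_q)
  also have "\<dots> \<sim> smul (q ^ (2 * i)) (kt ^ i * gen F)"
    by (rule cm_smul, rule cm_sym) (use ktF_pow[of i 1] in simp)
  finally show ?thesis .
qed

lemma E_pi: "gen E * pi j \<sim> pi (Suc j) * gen E"
proof -
  have "gen E * pi j = smul (1 / of_nat n) (\<Sum>i<n. smul (inverse q ^ (2 * i * j)) (gen E * kt ^ i))"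
    by (simp add: pim_def smul_sum sum_distrib_left)
  also have "\<dots> \<sim> smul (1 / of_nat n) (\<Sum>i<n. smul (inverse q ^ (2 * i * j)) (smul (inverse q ^ (2 * i)) (kt ^ i * gen E)))"
    by (intro cm_smul cm_sum E_kt_pow)
  also have "\<dots> = pi (Suc j) * gen E"
  proof -
    have ex: "inverse q ^ (2 * i + 2 * i * j) = inverse q ^ (2 * i * j) * inverse q ^ (2 * i)" for i
      by (simp only: power_add mult.commute)
    show ?thesis by (simp add: pim_def smul_sum sum_distrib_right ex)
  qed
  finally show ?thesis .
qed

lemma F_pi: "gen F * pi j \<sim> pi (j + n - 1) * gen F"
proof -
  have ex: "inverse q ^ (2 * i * (j + n - 1)) = inverse q ^ (2 * i * j) * q ^ (2 * i)" for i
  proof -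
    obtain N where nN: "n = Suc N" using n_gt1 by (cases n) auto
    have e: "2 * i * (j + n - 1) + 2 * i = 2 * i * j + n * (2 * i)" by (simp add: nN algebra_simps)
    have "inverse q ^ (2 * i * (j + n - 1)) * inverse q ^ (2 * i) = inverse q ^ (2 * i * j) * (inverse q ^ n) ^ (2 * i)"
      by (simp only: power_add[symmetric] power_mult[symmetric] e)
    then have "inverse q ^ (2 * i * (j + n - 1)) * inverse q ^ (2 * i) = inverse q ^ (2 * i * j)" by (simp add: iq_n)
    then show ?thesis using iq_q[of "2*i"] by (metis mult.assoc mult_1_right)
  qed
  have "gen F * pi j = smul (1 / of_nat n) (\<Sum>i<n. smul (inverse q ^ (2 * i * j)) (gen F * kt ^ i))"
    by (simp add: pim_def smul_sum sum_distrib_left)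
  also have "\<dots> \<sim> smul (1 / of_nat n) (\<Sum>i<n. smul (inverse q ^ (2 * i * j)) (smul (q ^ (2 * i)) (kt ^ i * gen F)))"
    by (intro cm_smul cm_sum F_kt_pow)
  also have "\<dots> = pi (j + n - 1) * gen F"
    by (simp add: pim_def smul_sum sum_distrib_right ex[unfolded One_nat_def])
  finally show ?thesis .
qed

lemma pi_orth: "j < n \<Longrightarrow> l < n \<Longrightarrow> pi j * pi l \<sim> (if j = l then pi j else 0)"
proof -
  assume jl: "j < n" "l < n"
  let ?x = "q ^ (2 * j) * inverse q ^ (2 * l)"
  have xk: "inverse q ^ (2 * k * l) * q ^ (2 * j * k) = ?x ^ k" for k
  proof -
    have "?x ^ k = q ^ (2*j*k) * inverse q ^ (2*l*k)" by (simp only: power_mult_distrib power_mult)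
    moreover have "2*l*k = 2*k*l" by simp
    ultimately show ?thesis by (simp only: mult.commute)
  qed
  have "pi j * pi l = smul (1 / of_nat n) (\<Sum>k<n. smul (inverse q ^ (2 * k * l)) (pi j * kt ^ k))"
    by (simp add: pim_def[of q n l] smul_sum sum_distrib_left)
  also have "\<dots> \<sim> smul (1 / of_nat n) (\<Sum>k<n. smul (inverse q ^ (2 * k * l)) (smul (q ^ (2 * j * k)) (pi j)))"
    by (intro cm_smul cm_sum pi_kt_pow)
  also have "\<dots> = smul (1 / of_nat n) (\<Sum>k<n. smul (?x ^ k) (pi j))"
    by (simp only: smul_smul xk)
  also have "\<dots> = smul (1 / of_nat n * (\<Sum>k<n. ?x ^ k)) (pi j)"
    by (simp only: sum_smul[symmetric] smul_smul)
  also have "\<dots> = (if j = l then pi j else 0)"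
  proof -
    have xn: "?x ^ n = 1"
    proof -
      have "?x ^ n = (q ^ n) ^ (2 * j) * (inverse q ^ n) ^ (2 * l)"
        by (simp add: power_mult_distrib power_mult[symmetric] mult.commute)
      then show ?thesis by (simp add: qn iq_n)
    qed
    show ?thesis
    proof (cases "j = l")
      case True
      then have "?x = 1" by (simp add: iq_q)
      then show ?thesis using True n_gt1 by simp
    next
      case False
      then have "?x \<noteq> 1" using q2_ne jl by blast
      then show ?thesis using False char_sum[OF xn] by simp
    qed
  qed
  finally show ?thesis .
qed

lemma pi_sum: "(\<Sum>j<n. pi j) = 1"
proof -
  have t: "(\<Sum>j<n. smul (inverse q ^ (2 * i * j)) (kt ^ i)) = smul (\<Sum>j<n. (inverse q ^ (2 * i)) ^ j) (kt ^ i)" for i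
    by (simp only: sum_smul power_mult)
  have "(\<Sum>j<n. pi j) = smul (1 / of_nat n) (\<Sum>j<n. \<Sum>i<n. smul (inverse q ^ (2 * i * j)) (kt ^ i))"
    by (simp add: pim_def smul_sum)
  also have "\<dots> = smul (1 / of_nat n) (\<Sum>i<n. \<Sum>j<n. smul (inverse q ^ (2 * i * j)) (kt ^ i))"
    by (rule arg_cong[where f="smul _"], rule sum.swap)
  also have "\<dots> = smul (1 / of_nat n) (\<Sum>i<n. smul (\<Sum>j<n. (inverse q ^ (2 * i)) ^ j) (kt ^ i))"
    by (simp only: t)
  also have "\<dots> = smul (1 / of_nat n) (\<Sum>i<n. if i = 0 then smul (of_nat n) 1 else 0)"
  proof -
    have "smul (\<Sum>j<n. (inverse q ^ (2 * i)) ^ j) (kt ^ i) = (if i = 0 then smul (of_nat n) 1 else 0)" if "i < n" for i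
    proof -
      have xn: "(inverse q ^ (2 * i)) ^ n = 1"
      proof -
        have "(inverse q ^ (2 * i)) ^ n = (inverse q ^ n) ^ (2 * i)" by (simp only: power_mult[symmetric] mult.commute)
        then show ?thesis by (simp add: iq_n)
      qed
      have "inverse q ^ (2 * i) = 1 \<longleftrightarrow> i = 0"
      proof
        assume h: "inverse q ^ (2 * i) = 1"
        have "q ^ (2 * i) = q ^ (2 * i) * inverse q ^ (2 * i)" by (simp add: h)
        also have "\<dots> = 1" by (rule iq_q)
        finally have "n dvd i" by (rule q2_pow_1)
        then show "i = 0" using that by (cases "i = 0") (auto dest: dvd_imp_le)
      qed simp
      then show ?thesis using char_sum[OF xn] by simp
    qed
    then show ?thesis by (intro arg_cong[where f="smul _"] sum.cong) auto
  qed
  also have "\<dots> = 1" using n_gt1 by simp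
  finally show ?thesis .
qed

end


definition Hm :: "complex \<Rightarrow> nat \<Rightarrow> (G + G) free" where
  "Hm q n = (\<Sum>j<n. T (pim q n j) (kt ^ j))"
definition Hdm :: "complex \<Rightarrow> nat \<Rightarrow> (G + G) free" where
  "Hdm q n = (\<Sum>l<n. T (pim q n l) (kt ^ (n - l)))"
definition am :: "complex \<Rightarrow> nat \<Rightarrow> complex" where
  "am q m = (q - inverse q) ^ m / qfact q m * q ^ (m * (m - 1) div 2)"
definition Xm :: "complex \<Rightarrow> nat \<Rightarrow> (G + G) free" where
  "Xm q n = (\<Sum>m<n. smul (am q m) (T (gen E ^ m) (gen F ^ m)))"
definition eT :: "(G + G) free" where
  "eT = T genP genP + T genQ genQ"

context RM begin

lemma H_Hd: "Hm q n * Hdm q n \<approx> 1"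
proof -
  have "Hm q n * Hdm q n = (\<Sum>j<n. \<Sum>l<n. T (pi j) (kt ^ j) * T (pi l) (kt ^ (n - l)))"
    by (simp add: Hm_def Hdm_def sum_product)
  also have "\<dots> \<approx> (\<Sum>j<n. \<Sum>l<n. T (pi j * pi l) (kt ^ j * kt ^ (n - l)))"
    by (intro cm_sum T_mult)
  also have "\<dots> \<approx> (\<Sum>j<n. \<Sum>l<n. T (if j = l then pi j else 0) (kt ^ j * kt ^ (n - l)))"
    by (intro cm_sum T_cong1 pi_orth) auto
  also have "\<dots> = (\<Sum>j<n. \<Sum>l<n. if j = l then T (pi j) (kt ^ j * kt ^ (n - l)) else 0)"
    by (intro sum.cong refl) auto
  also have "\<dots> = (\<Sum>j<n. T (pi j) (kt ^ n))"
  proof (rule sum.cong[OF refl])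
    fix j assume "j \<in> {..<n}"
    then have "kt ^ j * kt ^ (n - j) = kt ^ n" by (simp add: power_add[symmetric])
    then show "(\<Sum>l<n. if j = l then T (pi j) (kt ^ j * kt ^ (n - l)) else 0) = T (pi j) (kt ^ n)"
      using \<open>j \<in> {..<n}\<close> by simp
  qed
  also have "\<dots> \<approx> (\<Sum>j<n. T (pi j) 1)" by (intro cm_sum T_cong2 kt_n)
  also have "\<dots> = T (\<Sum>j<n. pi j) 1" by (simp add: T_sum1)
  also have "\<dots> = 1" by (simp add: pi_sum)
  finally show ?thesis .
qed

lemma central_P_T: "T genP genP * z \<approx> z * T genP genP" by (rule T_central) (rule P_central)+
lemma central_Q_T: "T genQ genQ * z \<approx> z * T genQ genQ" by (rule T_central) (rule Q_central)+
lemma eT_central: "eT * z \<approx> z * eT"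
  unfolding eT_def distrib_left distrib_right by (intro cm_add central_P_T central_Q_T)

lemma eT_idem: "eT * eT \<approx> eT"
proof -
  have "eT * eT = (T genP genP * T genP genP + T genQ genQ * T genQ genQ) + (T genP genP * T genQ genQ + T genQ genQ * T genP genP)"
    by (simp add: eT_def algebra_simps)
  also have "\<dots> \<approx> (T (genP * genP) (genP * genP) + T (genQ * genQ) (genQ * genQ)) + (T (genP * genQ) (genP * genQ) + T (genQ * genP) (genQ * genP))"
    by (intro cm_add T_mult)
  also have "\<dots> \<approx> (T genP genP + T genQ genQ) + (T 0 0 + T 0 0)"
    by (intro cm_add T_cong D1 D2 D4 D5)
  finally show ?thesis by (simp add: eT_def)
qed

end

context RM begin

lemma Em_kt_pow: "gen E ^ m * kt ^ i \<sim> smul (inverse q ^ (2 * i * m)) (kt ^ i * gen E ^ m)"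
proof -
  have "gen E ^ m * kt ^ i = smul (inverse q ^ (2 * i * m)) (smul (q ^ (2 * i * m)) (gen E ^ m * kt ^ i))"
    by (simp add: iq_q)
  also have "\<dots> \<sim> smul (inverse q ^ (2 * i * m)) (kt ^ i * gen E ^ m)"
    by (rule cm_smul, rule cm_sym, rule ktE_pow)
  finally show ?thesis .
qed

lemma Fm_kt_pow: "gen F ^ m * kt ^ i \<sim> smul (q ^ (2 * i * m)) (kt ^ i * gen F ^ m)"
proof -
  have "gen F ^ m * kt ^ i = smul (q ^ (2 * i * m)) (smul (inverse q ^ (2 * i * m)) (gen F ^ m * kt ^ i))"
    by (simp add: iq_q)
  also have "\<dots> \<sim> smul (q ^ (2 * i * m)) (kt ^ i * gen F ^ m)"
    by (rule cm_smul, rule cm_sym, rule ktF_pow)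
  finally show ?thesis .
qed

lemma cen_move:
  assumes cen: "\<And>y. p * y \<sim> y * p" and kp: "kp \<sim> p * kt ^ i" and comm: "x * kt ^ i \<sim> smul c (kt ^ i * x)"
  shows "x * kp \<sim> smul c (p * (kt ^ i * x))"
proof -
  have "x * kp \<sim> x * (p * kt ^ i)" by (rule cm_multL[OF kp])
  also have "\<dots> = (x * p) * kt ^ i" by (simp add: mult.assoc)
  also have "\<dots> \<sim> (p * x) * kt ^ i" by (rule cm_multR, rule cm_sym, rule cen)
  also have "\<dots> = p * (x * kt ^ i)" by (simp add: mult.assoc)
  also have "\<dots> \<sim> p * smul c (kt ^ i * x)" by (rule cm_multL[OF comm])
  finally show ?thesis by simp
qed

lemma T_term:
  assumes cen: "\<And>y. p * y \<sim> y * p" and kpi: "kpi \<sim> p * kt ^ i" and kpj: "kpj \<sim> p * kt ^ j"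
  shows "T (gen E ^ m * kpi) (gen F ^ m * kpj) \<approx>
     smul (inverse q ^ (2 * i * m) * q ^ (2 * j * m)) (T p p * T (kt ^ i) (kt ^ j) * T (gen E ^ m) (gen F ^ m))"
proof -
  have "T (gen E ^ m * kpi) (gen F ^ m * kpj) \<approx>
        T (smul (inverse q ^ (2 * i * m)) (p * (kt ^ i * gen E ^ m))) (smul (q ^ (2 * j * m)) (p * (kt ^ j * gen F ^ m)))"
    by (intro T_cong cen_move[OF cen] kpi kpj Em_kt_pow Fm_kt_pow)
  also have "\<dots> = smul (inverse q ^ (2 * i * m) * q ^ (2 * j * m)) (T (p * (kt ^ i * gen E ^ m)) (p * (kt ^ j * gen F ^ m)))"
    by (simp add: T_smul1 T_smul2 mult.commute)
  also have "\<dots> \<approx> smul (inverse q ^ (2 * i * m) * q ^ (2 * j * m)) (T p p * T (kt ^ i * gen E ^ m) (kt ^ j * gen F ^ m))"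
    by (rule cm_smul, rule cm_sym, rule T_mult)
  also have "\<dots> \<approx> smul (inverse q ^ (2 * i * m) * q ^ (2 * j * m)) (T p p * (T (kt ^ i) (kt ^ j) * T (gen E ^ m) (gen F ^ m)))"
    by (rule cm_smul, rule cm_multL, rule cm_sym, rule T_mult)
  finally show ?thesis by (simp add: mult.assoc)
qed

lemma coef: "Acoef q n i j m * (inverse q ^ (2 * i * m) * q ^ (2 * j * m)) = inverse q ^ (2 * i * j) / of_nat n * am q m"
proof -
  let ?A = "m * (m - 1) div 2"
  have z: "int ?A + 2 * int m * (int i - int j) - 2 * int i * int j
      = (int ?A + int (2 * i * m)) - (int (2 * j * m) + int (2 * i * j))" by (simp add: algebra_simps)
  have p: "q powi (int ?A + 2 * int m * (int i - int j) - 2 * int i * int j)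
      = q ^ ?A * q ^ (2 * i * m) / (q ^ (2 * j * m) * q ^ (2 * i * j))"
    unfolding z using q_nz by (simp only: power_int_diff power_int_add power_int_of_nat simp_thms)
  have "Acoef q n i j m * (inverse q ^ (2 * i * m) * q ^ (2 * j * m))
      = (1 / of_nat n) * ((q - inverse q) ^ m / qfact q m) * q ^ ?A *
        ((q ^ (2 * i * m) * inverse q ^ (2 * i * m)) * (inverse q ^ (2 * j * m) * q ^ (2 * j * m))) * inverse q ^ (2 * i * j)"
    unfolding Acoef_def p by (simp add: divide_inverse mult_ac power_inverse)
  also have "\<dots> = inverse q ^ (2 * i * j) / of_nat n * am q m"
    unfolding iq_q by (simp add: am_def divide_inverse mult_ac)
  finally show ?thesis .
qed

lemma H_expand: "Hm q n = (\<Sum>i<n. \<Sum>j<n. smul (inverse q ^ (2 * i * j) / of_nat n) (T (kt ^ i) (kt ^ j)))"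
proof -
  have "Hm q n = (\<Sum>j<n. \<Sum>i<n. smul (inverse q ^ (2 * i * j) / of_nat n) (T (kt ^ i) (kt ^ j)))"
    by (simp add: Hm_def pim_def T_smul1 T_sum1 smul_sum mult.commute divide_inverse)
  also have "\<dots> = (\<Sum>i<n. \<Sum>j<n. smul (inverse q ^ (2 * i * j) / of_nat n) (T (kt ^ i) (kt ^ j)))"
    by (rule sum.swap)
  finally show ?thesis .
qed

lemma HX_expand: "p * Hm q n * Xm q n = (\<Sum>i<n. \<Sum>j<n. \<Sum>m<n.
   smul (inverse q ^ (2 * i * j) / of_nat n * am q m) (p * T (kt ^ i) (kt ^ j) * T (gen E ^ m) (gen F ^ m)))"
proof -
  have "p * Hm q n * Xm q n = (\<Sum>i<n. \<Sum>j<n. (p * smul (inverse q ^ (2 * i * j) / of_nat n) (T (kt ^ i) (kt ^ j))) * Xm q n)"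
    by (simp only: H_expand sum_distrib_left sum_distrib_right)
  also have "\<dots> = (\<Sum>i<n. \<Sum>j<n. \<Sum>m<n.
   smul (inverse q ^ (2 * i * j) / of_nat n * am q m) (p * T (kt ^ i) (kt ^ j) * T (gen E ^ m) (gen F ^ m)))"
    by (simp add: Xm_def sum_distrib_left mult.assoc mult.commute)
  finally show ?thesis .
qed

lemma R_decomp: "Rtilde q n \<approx> eT * Hm q n * Xm q n"
proof -
  let ?A = "(\<Sum>i<n. \<Sum>j<n. \<Sum>m<n. smul (Acoef q n i j m) (T (gen E ^ m * Kpow genP i) (gen F ^ m * Kpow genP j)))
     + (\<Sum>i<n. \<Sum>j<n. \<Sum>m<n. smul (Acoef q n i j m) (T (gen E ^ m * Lpow genQ i) (gen F ^ m * Lpow genQ j)))"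
  let ?B = "(\<Sum>i<n. \<Sum>j<n. \<Sum>m<n. smul (Acoef q n i j m) (smul (inverse q ^ (2 * i * m) * q ^ (2 * j * m))
        (T genP genP * T (kt ^ i) (kt ^ j) * T (gen E ^ m) (gen F ^ m))))
     + (\<Sum>i<n. \<Sum>j<n. \<Sum>m<n. smul (Acoef q n i j m) (smul (inverse q ^ (2 * i * m) * q ^ (2 * j * m))
        (T genQ genQ * T (kt ^ i) (kt ^ j) * T (gen E ^ m) (gen F ^ m))))"
  have s1: "Rtilde q n = ?A" by (simp add: Rtilde_def T_def)
  have s2: "?A \<approx> ?B"
    by (intro cm_add cm_sum cm_smul) (rule T_term[OF P_central Kpow_eq Kpow_eq], rule T_term[OF Q_central Lpow_eq Lpow_eq])
  have s3: "?B = T genP genP * Hm q n * Xm q n + T genQ genQ * Hm q n * Xm q n"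
    by (simp only: HX_expand smul_smul coef)
  have s4: "T genP genP * Hm q n * Xm q n + T genQ genQ * Hm q n * Xm q n = eT * Hm q n * Xm q n"
    by (simp add: eT_def algebra_simps)
  show ?thesis using s2 unfolding s1 s3 s4 .
qed

end


lemma sum_split_shift:
  fixes N :: nat
  assumes h0: "cong_mod S (h 0) 0" and hs: "\<And>m. m < N \<Longrightarrow> cong_mod S (h (Suc m)) (k m)"
    and kN: "cong_mod S (k N) 0"
  shows "cong_mod S (\<Sum>m<Suc N. h m) (\<Sum>m<Suc N. k m)"
proof -
  have "(\<Sum>m<Suc N. h m) = (\<Sum>m<N. h (Suc m)) + h 0" by (simp only: sum.lessThan_Suc_shift add.commute)
  also have "cong_mod S \<dots> ((\<Sum>m<N. k m) + 0)" by (intro cm_add cm_sum hs h0) auto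
  also have "cong_mod S \<dots> ((\<Sum>m<N. k m) + k N)" by (intro cm_add cm_refl cm_sym[OF kN])
  also have "(\<Sum>m<N. k m) + k N = (\<Sum>m<Suc N. k m)" by simp
  finally show ?thesis .
qed

context RM begin

lemma am_0: "am q 0 = 1" by (simp add: am_def qfact_def)

lemma qint_nz: "0 < k \<Longrightarrow> k < n \<Longrightarrow> qint q k \<noteq> 0"
proof
  assume k: "0 < k" "k < n" and h: "qint q k = 0"
  have "q ^ k - inverse q ^ k = 0" using h qint_mul[of k] by simp
  then have "q ^ k * q ^ k = inverse q ^ k * q ^ k" by simp
  then have "q ^ (2 * k) = 1" by (simp add: iq_q power_add[symmetric] mult_2)
  then have "n dvd k" by (rule q2_pow_1)
  then show False using k by (auto dest: dvd_imp_le)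
qed

lemma am_rec: "Suc m < n \<Longrightarrow> am q (Suc m) * (qint q (Suc m) / (q - inverse q)) = am q m * q ^ m"
proof -
  assume h: "Suc m < n"
  have nz: "qint q (Suc m) \<noteq> 0" using qint_nz[of "Suc m"] h by simp
  have ex: "Suc m * (Suc m - 1) div 2 = m * (m - 1) div 2 + m"
  proof -
    have "Suc m * (Suc m - 1) = m * (m - 1) + 2 * m" by (cases m) (simp_all add: algebra_simps)
    then show ?thesis by simp
  qed
  have qf: "qfact q (Suc m) = qfact q m * qint q (Suc m)" by (simp add: qfact_def)
  show ?thesis
  proof (cases "qfact q m = 0")
    case True then show ?thesis unfolding am_def qf ex by simp
  next
    case False
    define D where "D = q - inverse q"
    have D: "D \<noteq> 0" using d_nz by (simp add: D_def)
    show ?thesis using nz D False unfolding am_def qf ex D_def[symmetric] by (simp add: power_add field_simps)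
  qed
qed

end


lemma combine4:
  assumes "cong_mod S a (s4 + s1)" "s1 = s2 + d" "cong_mod S d (s3 - s4)" "cong_mod S b (s2 + s3)"
  shows "cong_mod S a b"
proof -
  have "cong_mod S a (s4 + (s2 + d))" using assms(1,2) by simp
  also have "cong_mod S \<dots> (s4 + (s2 + (s3 - s4)))" by (intro cm_add cm_refl assms(3))
  also have "s4 + (s2 + (s3 - s4)) = s2 + s3" by (simp add: algebra_simps)
  also have "cong_mod S \<dots> b" by (rule cm_sym[OF assms(4)])
  finally show ?thesis .
qed

lemma combine4b:
  assumes "cong_mod S a (s3 + s2)" "s1 = s2 + d" "cong_mod S d (s3 - s4)" "cong_mod S b (s1 + s4)"
  shows "cong_mod S a b"
proof -
  have "cong_mod S b ((s2 + d) + s4)" using assms(4,2) by simp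
  also have "cong_mod S \<dots> ((s2 + (s3 - s4)) + s4)" by (intro cm_add cm_refl assms(3))
  also have "(s2 + (s3 - s4)) + s4 = s3 + s2" by (simp add: algebra_simps)
  finally show ?thesis using assms(1) by (meson cm_sym cm_trans)
qed

context RM begin

lemma T_m1L: "T 1 b * T c d \<approx> T c (b * d)" using T_mult[of 1 b c d] by simp
lemma T_m1R: "T a b * T 1 d \<approx> T a (b * d)" using T_mult[of a b 1 d] by simp
lemma T_mL1: "T a 1 * T c d \<approx> T (a * c) d" using T_mult[of a 1 c d] by simp
lemma T_mR1: "T a b * T c 1 \<approx> T (a * c) b" using T_mult[of a b c 1] by simp

lemma XE: "(T (gen E) kbt + T 1 (gen E)) * Xm q n \<approx> Xm q n * (T 1 (gen E) + T (gen E) kt)"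
proof -
  obtain N where nN: "n = Suc N" using n_gt1 by (cases n) auto
  let ?e = "gen E" and ?f = "gen F" and ?a = "am q"
  let ?S1 = "\<Sum>m<n. smul (?a m) (T (?e ^ m) (?e * ?f ^ m))"
  let ?S2 = "\<Sum>m<n. smul (?a m) (T (?e ^ m) (?f ^ m * ?e))"
  let ?S3 = "\<Sum>m<n. smul (?a m) (T (?e * ?e ^ m) (?f ^ m * kt))"
  let ?S4 = "\<Sum>m<n. smul (?a m * q ^ (2 * m)) (T (?e * ?e ^ m) (?f ^ m * kbt))"
  let ?D = "\<Sum>m<n. smul (?a m) (T (?e ^ m) (?e * ?f ^ m)) - smul (?a m) (T (?e ^ m) (?f ^ m * ?e))"
  have A1: "T 1 ?e * Xm q n \<approx> ?S1"
  proof -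
    have "T 1 ?e * Xm q n = (\<Sum>m<n. smul (?a m) (T 1 ?e * T (?e ^ m) (?f ^ m)))" by (simp add: Xm_def sum_distrib_left)
    then show ?thesis by (simp only:) (intro cm_sum cm_smul T_m1L)
  qed
  have A2: "Xm q n * T 1 ?e \<approx> ?S2"
  proof -
    have "Xm q n * T 1 ?e = (\<Sum>m<n. smul (?a m) (T (?e ^ m) (?f ^ m) * T 1 ?e))" by (simp add: Xm_def sum_distrib_right)
    then show ?thesis by (simp only:) (intro cm_sum cm_smul T_m1R)
  qed
  have A3: "Xm q n * T ?e kt \<approx> ?S3"
  proof -
    have "Xm q n * T ?e kt = (\<Sum>m<n. smul (?a m) (T (?e ^ m) (?f ^ m) * T ?e kt))" by (simp add: Xm_def sum_distrib_right)
    also have "cong_mod (rels_tensor q n) \<dots> (\<Sum>m<n. smul (?a m) (T (?e ^ m * ?e) (?f ^ m * kt)))" by (intro cm_sum cm_smul T_mult)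
    finally show ?thesis by (simp add: power_commutes)
  qed
  have A4: "T ?e kbt * Xm q n \<approx> ?S4"
  proof -
    have "T ?e kbt * Xm q n = (\<Sum>m<n. smul (?a m) (T ?e kbt * T (?e ^ m) (?f ^ m)))" by (simp add: Xm_def sum_distrib_left)
    also have "cong_mod (rels_tensor q n) \<dots> (\<Sum>m<n. smul (?a m) (T (?e * ?e ^ m) (kbt * ?f ^ m)))" by (intro cm_sum cm_smul T_mult)
    also have "cong_mod (rels_tensor q n) \<dots> (\<Sum>m<n. smul (?a m) (T (?e * ?e ^ m) (smul (q ^ (2 * m)) (?f ^ m * kbt))))"
      by (intro cm_sum cm_smul T_cong2 kbtF_pow)
    finally show ?thesis by (simp add: T_smul2)
  qed
  have LHS: "(T ?e kbt + T 1 ?e) * Xm q n \<approx> ?S4 + ?S1"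
    unfolding distrib_right by (intro cm_add A4 A1)
  have RHS: "Xm q n * (T 1 ?e + T ?e kt) \<approx> ?S2 + ?S3"
    unfolding distrib_left by (intro cm_add A2 A3)
  have S12: "?S1 = ?S2 + ?D" by (simp add: sum_subtractf)
  let ?h = "\<lambda>m. smul (?a m) (T (?e ^ m) (?e * ?f ^ m)) - smul (?a m) (T (?e ^ m) (?f ^ m * ?e))"
  let ?k = "\<lambda>m. smul (?a m) (T (?e * ?e ^ m) (?f ^ m * kt)) - smul (?a m * q ^ (2 * m)) (T (?e * ?e ^ m) (?f ^ m * kbt))"
  have D: "?D \<approx> ?S3 - ?S4"
  proof -
    have "(\<Sum>m<Suc N. ?h m) \<approx> (\<Sum>m<Suc N. ?k m)"
    proof (rule sum_split_shift)
      show "?h 0 \<approx> 0" by simp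
    next
      have "?e * ?e ^ N = ?e ^ n" by (simp add: nN)
      then have z: "?e * ?e ^ N \<sim> 0" using REn by simp
      have "?k N \<approx> smul (?a N) (T 0 (?f ^ N * kt)) - smul (?a N * q ^ (2 * N)) (T 0 (?f ^ N * kbt))"
        by (intro cm_diff cm_smul T_cong1 z)
      then show "?k N \<approx> 0" by simp
    next
      fix m assume m: "m < N"
      have c: "?a (Suc m) * (qint q (Suc m) / (q - inverse q)) = ?a m * q ^ m"
        using am_rec[of m] m nN by simp
      have "?h (Suc m) = smul (?a (Suc m)) (T (?e ^ Suc m) (?e * ?f ^ Suc m - ?f ^ Suc m * ?e))"
        by (simp only: T_diff2 smul_diff)
      also have "\<dots> \<approx> smul (?a (Suc m)) (T (?e ^ Suc m) (smul (qint q (Suc m) / (q - inverse q)) (?f ^ m * (smul (inverse q ^ m) kt - smul (q ^ m) kbt))))"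
        by (intro cm_smul T_cong2 CF)
      also have "\<dots> = smul (?a (Suc m) * (qint q (Suc m) / (q - inverse q)) * inverse q ^ m) (T (?e ^ Suc m) (?f ^ m * kt))
            - smul (?a (Suc m) * (qint q (Suc m) / (q - inverse q)) * q ^ m) (T (?e ^ Suc m) (?f ^ m * kbt))"
        by (simp only: T_smul2 T_diff2 smul_smul smul_diff right_diff_distrib smul_right mult.assoc)
      also have "\<dots> = ?k m" unfolding c by (simp add: mult.assoc iq_q power_add[symmetric] mult_2)
      finally show "?h (Suc m) \<approx> ?k m" .
    qed
    then show ?thesis by (simp only: nN[symmetric] sum_subtractf)
  qed
  show ?thesis by (rule combine4[OF LHS S12 D RHS])
qed

lemma kt_Em: "kt * gen E ^ m \<sim> smul (q ^ (2 * m)) (gen E ^ m * kt)"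
  using ktE_pow[of 1 m] by simp

lemma XF: "(T kt (gen F) + T (gen F) 1) * Xm q n \<approx> Xm q n * (T (gen F) 1 + T kbt (gen F))"
proof -
  obtain N where nN: "n = Suc N" using n_gt1 by (cases n) auto
  let ?e = "gen E" and ?f = "gen F" and ?a = "am q"
  let ?S1 = "\<Sum>m<n. smul (?a m) (T (?e ^ m * ?f) (?f ^ m))"
  let ?S2 = "\<Sum>m<n. smul (?a m) (T (?f * ?e ^ m) (?f ^ m))"
  let ?S3 = "\<Sum>m<n. smul (?a m * q ^ (2 * m)) (T (?e ^ m * kt) (?f * ?f ^ m))"
  let ?S4 = "\<Sum>m<n. smul (?a m) (T (?e ^ m * kbt) (?f * ?f ^ m))"
  let ?D = "\<Sum>m<n. smul (?a m) (T (?e ^ m * ?f) (?f ^ m)) - smul (?a m) (T (?f * ?e ^ m) (?f ^ m))"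
  have A1: "Xm q n * T ?f 1 \<approx> ?S1"
  proof -
    have "Xm q n * T ?f 1 = (\<Sum>m<n. smul (?a m) (T (?e ^ m) (?f ^ m) * T ?f 1))" by (simp add: Xm_def sum_distrib_right)
    then show ?thesis by (simp only:) (intro cm_sum cm_smul T_mR1)
  qed
  have A2: "T ?f 1 * Xm q n \<approx> ?S2"
  proof -
    have "T ?f 1 * Xm q n = (\<Sum>m<n. smul (?a m) (T ?f 1 * T (?e ^ m) (?f ^ m)))" by (simp add: Xm_def sum_distrib_left)
    then show ?thesis by (simp only:) (intro cm_sum cm_smul T_mL1)
  qed
  have A3: "T kt ?f * Xm q n \<approx> ?S3"
  proof -
    have "T kt ?f * Xm q n = (\<Sum>m<n. smul (?a m) (T kt ?f * T (?e ^ m) (?f ^ m)))" by (simp add: Xm_def sum_distrib_left)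
    also have "cong_mod (rels_tensor q n) \<dots> (\<Sum>m<n. smul (?a m) (T (kt * ?e ^ m) (?f * ?f ^ m)))" by (intro cm_sum cm_smul T_mult)
    also have "cong_mod (rels_tensor q n) \<dots> (\<Sum>m<n. smul (?a m) (T (smul (q ^ (2 * m)) (?e ^ m * kt)) (?f * ?f ^ m)))"
      by (intro cm_sum cm_smul T_cong1 kt_Em)
    finally show ?thesis by (simp add: T_smul1)
  qed
  have A4: "Xm q n * T kbt ?f \<approx> ?S4"
  proof -
    have "Xm q n * T kbt ?f = (\<Sum>m<n. smul (?a m) (T (?e ^ m) (?f ^ m) * T kbt ?f))" by (simp add: Xm_def sum_distrib_right)
    also have "cong_mod (rels_tensor q n) \<dots> (\<Sum>m<n. smul (?a m) (T (?e ^ m * kbt) (?f ^ m * ?f)))" by (intro cm_sum cm_smul T_mult)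
    finally show ?thesis by (simp add: power_commutes)
  qed
  have LHS: "(T kt ?f + T ?f 1) * Xm q n \<approx> ?S3 + ?S2"
    unfolding distrib_right by (intro cm_add A3 A2)
  have RHS: "Xm q n * (T ?f 1 + T kbt ?f) \<approx> ?S1 + ?S4"
    unfolding distrib_left by (intro cm_add A1 A4)
  have S12: "?S1 = ?S2 + ?D" by (simp add: sum_subtractf)
  let ?h = "\<lambda>m. smul (?a m) (T (?e ^ m * ?f) (?f ^ m)) - smul (?a m) (T (?f * ?e ^ m) (?f ^ m))"
  let ?k = "\<lambda>m. smul (?a m * q ^ (2 * m)) (T (?e ^ m * kt) (?f * ?f ^ m)) - smul (?a m) (T (?e ^ m * kbt) (?f * ?f ^ m))"
  have D: "?D \<approx> ?S3 - ?S4"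
  proof -
    have "(\<Sum>m<Suc N. ?h m) \<approx> (\<Sum>m<Suc N. ?k m)"
    proof (rule sum_split_shift)
      show "?h 0 \<approx> 0" by simp
    next
      have "?f * ?f ^ N = ?f ^ n" by (simp add: nN)
      then have z: "?f * ?f ^ N \<sim> 0" using RFn by simp
      have "?k N \<approx> smul (?a N * q ^ (2 * N)) (T (?e ^ N * kt) 0) - smul (?a N) (T (?e ^ N * kbt) 0)"
        by (intro cm_diff cm_smul T_cong2 z)
      then show "?k N \<approx> 0" by simp
    next
      fix m assume m: "m < N"
      have c: "?a (Suc m) * (qint q (Suc m) / (q - inverse q)) = ?a m * q ^ m"
        using am_rec[of m] m nN by simp
      have "?h (Suc m) = smul (?a (Suc m)) (T (?e ^ Suc m * ?f - ?f * ?e ^ Suc m) (?f ^ Suc m))"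
        by (simp only: T_diff1 smul_diff)
      also have "\<dots> \<approx> smul (?a (Suc m)) (T (smul (qint q (Suc m) / (q - inverse q)) (?e ^ m * (smul (q ^ m) kt - smul (inverse q ^ m) kbt))) (?f ^ Suc m))"
        by (intro cm_smul T_cong1 CE)
      also have "\<dots> = smul (?a (Suc m) * (qint q (Suc m) / (q - inverse q)) * q ^ m) (T (?e ^ m * kt) (?f ^ Suc m))
            - smul (?a (Suc m) * (qint q (Suc m) / (q - inverse q)) * inverse q ^ m) (T (?e ^ m * kbt) (?f ^ Suc m))"
        by (simp only: T_smul1 T_diff1 smul_smul smul_diff right_diff_distrib smul_right mult.assoc)
      also have "\<dots> = ?k m" unfolding c by (simp add: mult.assoc iq_q power_add[symmetric] mult_2)
      finally show "?h (Suc m) \<approx> ?k m" .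
    qed
    then show ?thesis by (simp only: nN[symmetric] sum_subtractf)
  qed
  show ?thesis by (rule combine4b[OF LHS S12 D RHS])
qed

end

context RM begin

lemma kt_pow_n: "kt ^ (a + n) \<sim> kt ^ a"
proof -
  have "kt ^ (a + n) = kt ^ a * kt ^ n" by (simp add: power_add)
  also have "\<dots> \<sim> kt ^ a * 1" by (rule cm_multL[OF kt_n])
  finally show ?thesis by simp
qed

lemma kt_kbt_pow: "kt ^ j * kbt \<sim> kt ^ (j + n - 1)"
proof -
  have "kt ^ j * kbt \<sim> kt ^ j * kt ^ (n - 1)" by (rule cm_multL[OF kbt_pow])
  also have "kt ^ j * kt ^ (n - 1) = kt ^ (j + n - 1)" using n_gt1 by (simp add: power_add[symmetric])
  finally show ?thesis .
qed

lemma kbt_kt_pow: "kbt * kt ^ j \<sim> kt ^ (j + n - 1)"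
proof -
  have "kbt * kt ^ j \<sim> kt ^ (n - 1) * kt ^ j" by (rule cm_multR[OF kbt_pow])
  also have "kt ^ (n - 1) * kt ^ j = kt ^ (j + n - 1)" using n_gt1 by (simp add: power_add[symmetric] add.commute)
  finally show ?thesis .
qed

lemma HE: "(T (gen E) 1 + T kt (gen E)) * Hm q n \<approx> Hm q n * (T (gen E) kbt + T 1 (gen E))"
proof -
  let ?e = "gen E"
  let ?g = "\<lambda>j. T (pi j * ?e) (kt ^ (j + n - 1))"
  have a: "T ?e 1 * Hm q n \<approx> (\<Sum>j<n. ?g (j + 1))"
  proof -
    have "T ?e 1 * Hm q n = (\<Sum>j<n. T ?e 1 * T (pi j) (kt ^ j))" by (simp add: Hm_def sum_distrib_left)
    also have "cong_mod (rels_tensor q n) \<dots> (\<Sum>j<n. T (?e * pi j) (kt ^ j))" by (intro cm_sum T_mL1)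
    also have "cong_mod (rels_tensor q n) \<dots> (\<Sum>j<n. ?g (j + 1))"
    proof (intro cm_sum T_cong)
      fix j show "?e * pi j \<sim> pi (j + 1) * ?e" using E_pi by simp
      have "kt ^ (j + 1 + n - 1) = kt ^ (j + n)" by simp
      then show "kt ^ j \<sim> kt ^ (j + 1 + n - 1)" using cm_sym[OF kt_pow_n[of j]] by simp
    qed
    finally show ?thesis .
  qed
  have b: "Hm q n * T ?e kbt \<approx> (\<Sum>j<n. ?g j)"
  proof -
    have "Hm q n * T ?e kbt = (\<Sum>j<n. T (pi j) (kt ^ j) * T ?e kbt)" by (simp add: Hm_def sum_distrib_right)
    also have "cong_mod (rels_tensor q n) \<dots> (\<Sum>j<n. T (pi j * ?e) (kt ^ j * kbt))" by (intro cm_sum T_mult)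
    also have "cong_mod (rels_tensor q n) \<dots> (\<Sum>j<n. ?g j)" by (intro cm_sum T_cong2 kt_kbt_pow)
    finally show ?thesis .
  qed
  have ab: "(\<Sum>j<n. ?g (j + 1)) \<approx> (\<Sum>j<n. ?g j)"
  proof (rule sum_shift_periodic)
    fix j
    have "kt ^ (j + n + n - 1) = kt ^ ((j + n - 1) + n)" using n_gt1 by (simp add: algebra_simps)
    then have "kt ^ (j + n + n - 1) \<sim> kt ^ (j + n - 1)" using kt_pow_n[of "j + n - 1"] by simp
    then show "?g (j + n) \<approx> ?g j" by (simp add: pi_periodic T_cong2)
  qed
  have c: "T kt ?e * Hm q n \<approx> (\<Sum>j<n. T (pi j) (kt ^ j * ?e))"
  proof -
    have "T kt ?e * Hm q n = (\<Sum>j<n. T kt ?e * T (pi j) (kt ^ j))" by (simp add: Hm_def sum_distrib_left)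
    also have "cong_mod (rels_tensor q n) \<dots> (\<Sum>j<n. T (kt * pi j) (?e * kt ^ j))" by (intro cm_sum T_mult)
    also have "cong_mod (rels_tensor q n) \<dots> (\<Sum>j<n. T (smul (q ^ (2 * j)) (pi j)) (smul (inverse q ^ (2 * j)) (kt ^ j * ?e)))"
      by (intro cm_sum T_cong kt_pi E_kt_pow)
    also have "(\<Sum>j<n. T (smul (q ^ (2 * j)) (pi j)) (smul (inverse q ^ (2 * j)) (kt ^ j * ?e))) = (\<Sum>j<n. T (pi j) (kt ^ j * ?e))"
      by (simp add: T_smul1 T_smul2 iq_q)
    finally show ?thesis .
  qed
  have d: "Hm q n * T 1 ?e \<approx> (\<Sum>j<n. T (pi j) (kt ^ j * ?e))"
  proof -
    have "Hm q n * T 1 ?e = (\<Sum>j<n. T (pi j) (kt ^ j) * T 1 ?e)" by (simp add: Hm_def sum_distrib_right)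
    also have "cong_mod (rels_tensor q n) \<dots> (\<Sum>j<n. T (pi j) (kt ^ j * ?e))" by (intro cm_sum T_m1R)
    finally show ?thesis .
  qed
  have "(T ?e 1 + T kt ?e) * Hm q n \<approx> (\<Sum>j<n. ?g j) + (\<Sum>j<n. T (pi j) (kt ^ j * ?e))"
    unfolding distrib_right by (intro cm_add cm_trans[OF a ab] c)
  moreover have "Hm q n * (T ?e kbt + T 1 ?e) \<approx> (\<Sum>j<n. ?g j) + (\<Sum>j<n. T (pi j) (kt ^ j * ?e))"
    unfolding distrib_left by (intro cm_add b d)
  ultimately show ?thesis by (meson cm_sym cm_trans)
qed

lemma HF: "(T 1 (gen F) + T (gen F) kbt) * Hm q n \<approx> Hm q n * (T kt (gen F) + T (gen F) 1)"
proof -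
  let ?f = "gen F"
  let ?g = "\<lambda>j. T (pi j * ?f) (kt ^ j)"
  have a: "T 1 ?f * Hm q n \<approx> (\<Sum>j<n. smul (q ^ (2 * j)) (T (pi j) (kt ^ j * ?f)))"
  proof -
    have "T 1 ?f * Hm q n = (\<Sum>j<n. T 1 ?f * T (pi j) (kt ^ j))" by (simp add: Hm_def sum_distrib_left)
    also have "cong_mod (rels_tensor q n) \<dots> (\<Sum>j<n. T (pi j) (?f * kt ^ j))" by (intro cm_sum T_m1L)
    also have "cong_mod (rels_tensor q n) \<dots> (\<Sum>j<n. T (pi j) (smul (q ^ (2 * j)) (kt ^ j * ?f)))" by (intro cm_sum T_cong2 F_kt_pow)
    finally show ?thesis by (simp add: T_smul2)
  qed
  have b: "Hm q n * T kt ?f \<approx> (\<Sum>j<n. smul (q ^ (2 * j)) (T (pi j) (kt ^ j * ?f)))"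
  proof -
    have "Hm q n * T kt ?f = (\<Sum>j<n. T (pi j) (kt ^ j) * T kt ?f)" by (simp add: Hm_def sum_distrib_right)
    also have "cong_mod (rels_tensor q n) \<dots> (\<Sum>j<n. T (pi j * kt) (kt ^ j * ?f))" by (intro cm_sum T_mult)
    also have "cong_mod (rels_tensor q n) \<dots> (\<Sum>j<n. T (smul (q ^ (2 * j)) (pi j)) (kt ^ j * ?f))"
      by (intro cm_sum T_cong1) (use pi_kt_pow[of _ 1] in simp)
    finally show ?thesis by (simp add: T_smul1)
  qed
  have c: "T ?f kbt * Hm q n \<approx> (\<Sum>j<n. ?g (j + (n - 1)))"
  proof -
    have "T ?f kbt * Hm q n = (\<Sum>j<n. T ?f kbt * T (pi j) (kt ^ j))" by (simp add: Hm_def sum_distrib_left)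
    also have "cong_mod (rels_tensor q n) \<dots> (\<Sum>j<n. T (?f * pi j) (kbt * kt ^ j))" by (intro cm_sum T_mult)
    also have "cong_mod (rels_tensor q n) \<dots> (\<Sum>j<n. ?g (j + (n - 1)))"
    proof (intro cm_sum T_cong)
      fix j
      show "?f * pi j \<sim> pi (j + (n - 1)) * ?f" using F_pi[of j] n_gt1 by simp
      show "kbt * kt ^ j \<sim> kt ^ (j + (n - 1))" using kbt_kt_pow[of j] n_gt1 by simp
    qed
    finally show ?thesis .
  qed
  have cd: "(\<Sum>j<n. ?g (j + (n - 1))) \<approx> (\<Sum>j<n. ?g j)"
  proof (rule sum_shift_periodic)
    fix j show "?g (j + n) \<approx> ?g j" by (simp add: pi_periodic T_cong2 kt_pow_n)
  qed
  have d: "Hm q n * T ?f 1 \<approx> (\<Sum>j<n. ?g j)"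
  proof -
    have "Hm q n * T ?f 1 = (\<Sum>j<n. T (pi j) (kt ^ j) * T ?f 1)" by (simp add: Hm_def sum_distrib_right)
    also have "cong_mod (rels_tensor q n) \<dots> (\<Sum>j<n. ?g j)" by (intro cm_sum T_mR1)
    finally show ?thesis .
  qed
  have "(T 1 ?f + T ?f kbt) * Hm q n \<approx> (\<Sum>j<n. smul (q ^ (2 * j)) (T (pi j) (kt ^ j * ?f))) + (\<Sum>j<n. ?g j)"
    unfolding distrib_right by (intro cm_add a cm_trans[OF c cd])
  moreover have "Hm q n * (T kt ?f + T ?f 1) \<approx> (\<Sum>j<n. smul (q ^ (2 * j)) (T (pi j) (kt ^ j * ?f))) + (\<Sum>j<n. ?g j)"
    unfolding distrib_left by (intro cm_add b d)
  ultimately show ?thesis by (meson cm_sym cm_trans)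
qed

end


lemma gl_T: "gl x = T (gen x) 1" by (simp add: gl_def T_def)
lemma gr_T: "gr x = T 1 (gen x)" by (simp add: gr_def T_def)
lemma T_L_R: "T a 1 * T 1 b = T a b" by (simp add: T_def)

lemma Delta_gen_eq: "Delta (gen x) = Delta_gen x" by (simp add: Delta_def)
lemma Dcop_gen_eq: "Delta_cop (gen x) = rename flip (Delta_gen x)" by (simp add: Delta_cop_def Delta_gen_eq)
lemma rename_flip_gl: "rename flip (gl x) = gr x" by (simp add: gl_def gr_def flip_def)
lemma rename_flip_gr: "rename flip (gr x) = gl x" by (simp add: gl_def gr_def flip_def)

definition Rt :: "complex \<Rightarrow> nat \<Rightarrow> (G + G) free" where "Rt q n = eT * Hm q n * Xm q n"

context RM begin

lemma T_comm_sc: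
  assumes "z1 * a \<sim> smul c (a * z1)" "z2 * b \<sim> smul c' (b * z2)" "c * c' = 1"
  shows "commutes (T z1 z2) (T a b)"
proof -
  have "T z1 z2 * T a b \<approx> T (z1 * a) (z2 * b)" by (rule T_mult)
  also have "\<dots> \<approx> T (smul c (a * z1)) (smul c' (b * z2))" by (intro T_cong assms)
  also have "\<dots> = T (a * z1) (b * z2)" using assms(3) by (simp add: T_smul1 T_smul2 mult.commute)
  also have "\<dots> \<approx> T a b * T z1 z2" by (rule cm_sym[OF T_mult])
  finally show ?thesis by (simp add: commutes_def)
qed

lemma T_comm: "z1 * a = a * z1 \<Longrightarrow> z2 * b = b * z2 \<Longrightarrow> commutes (T z1 z2) (T a b)"
  by (rule T_comm_sc[where c=1 and c'=1]) auto

lemma ktkt_H: "commutes (T kt kt) (Hm q n)"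
  unfolding Hm_def by (intro commutes_sum T_comm) (simp_all add: pi_kt_comm power_commutes)

lemma ktkt_X: "commutes (T kt kt) (Xm q n)"
  unfolding Xm_def
proof (intro commutes_sum commutes_smul)
  fix m
  show "commutes (T kt kt) (T (gen E ^ m) (gen F ^ m))"
    by (rule T_comm_sc[OF kt_Em]) (use ktF_pow[of 1 m] iq_q[of "2*m"] in simp_all)
qed

lemma central_commutes: "(\<And>z. c * z \<approx> z * c) \<Longrightarrow> commutes c y"
  by (simp add: commutes_def)

lemma ktkt_Rt: "commutes (T kt kt) (Rt q n)"
  unfolding Rt_def
  by (intro commutes_mult ktkt_H ktkt_X commutes_sym[OF central_commutes] eT_central)

lemma gen_case:
  assumes "Delta_cop g \<approx> Z" "Delta g \<approx> Z" "commutes Z (Rt q n)"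
  shows "Delta_cop g * Rt q n \<approx> Rt q n * Delta g"
proof -
  have "Delta_cop g * Rt q n \<approx> Z * Rt q n" by (rule cm_multR[OF assms(1)])
  also have "\<dots> \<approx> Rt q n * Z" using assms(3) by (simp add: commutes_def)
  also have "\<dots> \<approx> Rt q n * Delta g" by (rule cm_multL[OF cm_sym[OF assms(2)]])
  finally show ?thesis .
qed

lemma TPP_comm: "commutes (T genP genP) y" by (rule central_commutes) (rule central_P_T)
lemma TQQ_comm: "commutes (T genQ genQ) y" by (rule central_commutes) (rule central_Q_T)
lemma TPQ_comm: "commutes (T genP genQ) y" by (rule central_commutes) (rule T_central; rule P_central Q_central)
lemma TQP_comm: "commutes (T genQ genP) y" by (rule central_commutes) (rule T_central; rule P_central Q_central)

lemma T_split: "a \<sim> p * x \<Longrightarrow> b \<sim> p' * y \<Longrightarrow> T a b \<approx> T p p' * T x y"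
  by (rule cm_trans[OF T_cong cm_sym[OF T_mult]])

lemma T_pow: "T a b ^ m \<approx> T (a ^ m) (b ^ m)"
proof (induction m)
  case 0 then show ?case by simp
next
  case (Suc m)
  have "T a b ^ Suc m = T a b * T a b ^ m" by simp
  also have "\<dots> \<approx> T a b * T (a ^ m) (b ^ m)" by (rule cm_multL[OF Suc.IH])
  also have "\<dots> \<approx> T (a ^ Suc m) (b ^ Suc m)" using T_mult by simp
  finally show ?case .
qed

lemma kbtkbt_Rt: "commutes (T kbt kbt) (Rt q n)"
proof -
  have "commutes (T kt kt ^ (n - 1)) (Rt q n)" using commutes_power[OF commutes_sym[OF ktkt_Rt]] by (rule commutes_sym)
  moreover have "T kt kt ^ (n - 1) \<approx> T kbt kbt"
    by (rule cm_trans[OF T_pow]) (intro T_cong cm_sym[OF kbt_pow])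
  ultimately show ?thesis by (meson commutes_cong commutes_sym)
qed

lemma case_K: "Delta_cop (gen K) * Rt q n \<approx> Rt q n * Delta (gen K)"
proof (rule gen_case)
  show "Delta (gen K) \<approx> T genP genP * T kt kt"
    by (simp add: Delta_gen_eq gl_T gr_T T_L_R) (intro T_split K_eq)
  show "Delta_cop (gen K) \<approx> T genP genP * T kt kt"
    by (simp add: Dcop_gen_eq rename_flip_gl rename_flip_gr, simp add: gl_T gr_T)
      (rule cm_trans[OF T_mult], simp, intro T_split K_eq)
  show "commutes (T genP genP * T kt kt) (Rt q n)" by (intro commutes_mult1 TPP_comm ktkt_Rt)
qed

lemma case_Kb: "Delta_cop (gen Kb) * Rt q n \<approx> Rt q n * Delta (gen Kb)"
proof (rule gen_case)
  show "Delta (gen Kb) \<approx> T genP genP * T kbt kbt"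
    by (simp add: Delta_gen_eq gl_T gr_T T_L_R) (intro T_split Kb_eq)
  show "Delta_cop (gen Kb) \<approx> T genP genP * T kbt kbt"
    by (simp add: Dcop_gen_eq rename_flip_gl rename_flip_gr, simp add: gl_T gr_T)
      (rule cm_trans[OF T_mult], simp, intro T_split Kb_eq)
  show "commutes (T genP genP * T kbt kbt) (Rt q n)" by (intro commutes_mult1 TPP_comm kbtkbt_Rt)
qed

lemma case_L: "Delta_cop (gen L) * Rt q n \<approx> Rt q n * Delta (gen L)"
proof (rule gen_case)
  let ?Z = "T genQ genQ * T kt kt + T genQ genP * T kt kt + T genP genQ * T kt kt"
  show "Delta (gen L) \<approx> ?Z"
    by (simp add: Delta_gen_eq gl_T gr_T T_L_R) (intro cm_add T_split L_eq K_eq)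
  have "Delta_cop (gen L) = T 1 (gen L) * T (gen L) 1 + T 1 (gen L) * T (gen K) 1 + T 1 (gen K) * T (gen L) 1"
    by (simp add: Dcop_gen_eq rename_flip_gl rename_flip_gr, simp add: gl_T gr_T)
  also have "\<dots> \<approx> T (gen L) (gen L) + T (gen K) (gen L) + T (gen L) (gen K)"
    by (intro cm_add; rule cm_trans[OF T_mult], simp)
  also have "\<dots> \<approx> T genQ genQ * T kt kt + T genP genQ * T kt kt + T genQ genP * T kt kt"
    by (intro cm_add T_split L_eq K_eq)
  also have "\<dots> = ?Z" by (simp add: add_ac)
  finally show "Delta_cop (gen L) \<approx> ?Z" .
  show "commutes ?Z (Rt q n)"
    by (rule commutes_sym) (intro commutes_add commutes_mult commutes_sym[OF TQQ_comm] commutes_sym[OF TQP_comm] commutes_sym[OF TPQ_comm] commutes_sym[OF ktkt_Rt])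
qed

lemma case_Lb: "Delta_cop (gen Lb) * Rt q n \<approx> Rt q n * Delta (gen Lb)"
proof (rule gen_case)
  let ?Z = "T genQ genQ * T kbt kbt + T genQ genP * T kbt kbt + T genP genQ * T kbt kbt"
  show "Delta (gen Lb) \<approx> ?Z"
    by (simp add: Delta_gen_eq gl_T gr_T T_L_R) (intro cm_add T_split Lb_eq Kb_eq)
  have "Delta_cop (gen Lb) = T 1 (gen Lb) * T (gen Lb) 1 + T 1 (gen Lb) * T (gen Kb) 1 + T 1 (gen Kb) * T (gen Lb) 1"
    by (simp add: Dcop_gen_eq rename_flip_gl rename_flip_gr, simp add: gl_T gr_T)
  also have "\<dots> \<approx> T (gen Lb) (gen Lb) + T (gen Kb) (gen Lb) + T (gen Lb) (gen Kb)"
    by (intro cm_add; rule cm_trans[OF T_mult], simp)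
  also have "\<dots> \<approx> T genQ genQ * T kbt kbt + T genP genQ * T kbt kbt + T genQ genP * T kbt kbt"
    by (intro cm_add T_split Lb_eq Kb_eq)
  also have "\<dots> = ?Z" by (simp add: add_ac)
  finally show "Delta_cop (gen Lb) \<approx> ?Z" .
  show "commutes ?Z (Rt q n)"
    by (rule commutes_sym) (intro commutes_add commutes_mult commutes_sym[OF TQQ_comm] commutes_sym[OF TQP_comm] commutes_sym[OF TPQ_comm] commutes_sym[OF kbtkbt_Rt])
qed

lemma eT_move: "W * Rt q n \<approx> eT * (W * Hm q n) * Xm q n"
proof -
  have "W * Rt q n = (W * eT) * (Hm q n * Xm q n)" by (simp add: Rt_def mult.assoc)
  also have "\<dots> \<approx> (eT * W) * (Hm q n * Xm q n)" by (rule cm_multR, rule cm_sym, rule eT_central)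
  finally show ?thesis by (simp add: mult.assoc)
qed

lemma case_E: "Delta_cop (gen E) * Rt q n \<approx> Rt q n * Delta (gen E)"
proof -
  have dE: "Delta (gen E) = T 1 (gen E) + T (gen E) kt"
    by (simp add: Delta_gen_eq gl_T gr_T kt_def T_add2[symmetric] T_L_R)
  have "Delta_cop (gen E) = T (gen E) 1 + T 1 (gen E) * T kt 1"
    by (simp add: Dcop_gen_eq rename_flip_gl rename_flip_gr, simp add: gl_T gr_T kt_def T_add1[symmetric])
  also have "\<dots> \<approx> T (gen E) 1 + T kt (gen E)" by (intro cm_add cm_refl) (rule cm_trans[OF T_mult], simp)
  finally have dc: "Delta_cop (gen E) \<approx> T (gen E) 1 + T kt (gen E)" .
  have "Delta_cop (gen E) * Rt q n \<approx> (T (gen E) 1 + T kt (gen E)) * Rt q n" by (rule cm_multR[OF dc])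
  also have "\<dots> \<approx> eT * ((T (gen E) 1 + T kt (gen E)) * Hm q n) * Xm q n" by (rule eT_move)
  also have "\<dots> \<approx> eT * (Hm q n * (T (gen E) kbt + T 1 (gen E))) * Xm q n" by (intro cm_multL cm_multR HE)
  also have "\<dots> = eT * Hm q n * ((T (gen E) kbt + T 1 (gen E)) * Xm q n)" by (simp add: mult.assoc)
  also have "\<dots> \<approx> eT * Hm q n * (Xm q n * (T 1 (gen E) + T (gen E) kt))" by (intro cm_multL XE)
  also have "\<dots> = Rt q n * Delta (gen E)" by (simp add: Rt_def dE mult.assoc)
  finally show ?thesis .
qed

lemma case_F: "Delta_cop (gen F) * Rt q n \<approx> Rt q n * Delta (gen F)"
proof -
  have dF: "Delta (gen F) = T (gen F) 1 + T kbt (gen F)"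
    by (simp add: Delta_gen_eq gl_T gr_T kbt_def T_add1[symmetric] T_L_R)
  have "Delta_cop (gen F) = T 1 (gen F) + T 1 kbt * T (gen F) 1"
    by (simp add: Dcop_gen_eq rename_flip_gl rename_flip_gr, simp add: gl_T gr_T kbt_def T_add2[symmetric])
  also have "\<dots> \<approx> T 1 (gen F) + T (gen F) kbt" by (intro cm_add cm_refl) (rule cm_trans[OF T_mult], simp)
  finally have dc: "Delta_cop (gen F) \<approx> T 1 (gen F) + T (gen F) kbt" .
  have "Delta_cop (gen F) * Rt q n \<approx> (T 1 (gen F) + T (gen F) kbt) * Rt q n" by (rule cm_multR[OF dc])
  also have "\<dots> \<approx> eT * ((T 1 (gen F) + T (gen F) kbt) * Hm q n) * Xm q n" by (rule eT_move)
  also have "\<dots> \<approx> eT * (Hm q n * (T kt (gen F) + T (gen F) 1)) * Xm q n" by (intro cm_multL cm_multR HF)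
  also have "\<dots> = eT * Hm q n * ((T kt (gen F) + T (gen F) 1) * Xm q n)" by (simp add: mult.assoc)
  also have "\<dots> \<approx> eT * Hm q n * (Xm q n * (T (gen F) 1 + T kbt (gen F)))" by (intro cm_multL XF)
  also have "\<dots> = Rt q n * Delta (gen F)" by (simp add: Rt_def dF mult.assoc)
  finally show ?thesis .
qed

end


lemma Delta_add: "Delta (a + b) = Delta a + Delta b" by (simp add: Delta_def ext_hom_add)
lemma Delta_mult: "Delta (a * b) = Delta a * Delta b" by (simp add: Delta_def ext_hom_mult)
lemma Delta_sc: "Delta (sc c) = sc c" by (simp add: Delta_def)
lemma Dcop_add: "Delta_cop (a + b) = Delta_cop a + Delta_cop b" by (simp add: Delta_cop_def Delta_add)
lemma Dcop_mult: "Delta_cop (a * b) = Delta_cop a * Delta_cop b" by (simp add: Delta_cop_def Delta_mult)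
lemma Dcop_sc: "Delta_cop (sc c) = sc c" by (simp add: Delta_cop_def Delta_sc)

lemma telescope: "(1 - x) * (\<Sum>k<m. x ^ k) = (1::'a::ring_1) - x ^ m"
proof (induction m)
  case 0 then show ?case by simp
next
  case (Suc m)
  have "(1 - x) * (\<Sum>k<Suc m. x ^ k) = (1 - x) * (\<Sum>k<m. x ^ k) + (1 - x) * x ^ m" by (simp add: distrib_left)
  also have "\<dots> = (1 - x ^ m) + (x ^ m - x ^ Suc m)" by (simp only: Suc.IH) (simp add: algebra_simps)
  finally show ?case by simp
qed

lemma comm_pow: "a * b = b * (a::'a::ring_1) \<Longrightarrow> (a * b) ^ m = a ^ m * b ^ m"
proof (induction m)
  case 0 then show ?case by simp
next
  case (Suc m)
  have bm: "b * a ^ m = a ^ m * b"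
  proof (induction m)
    case 0 then show ?case by simp
  next
    case (Suc m)
    have "b * a ^ Suc m = (b * a) * a ^ m" by (simp add: mult.assoc)
    also have "\<dots> = a * (b * a ^ m)" using \<open>a * b = b * a\<close> by (metis mult.assoc)
    also have "\<dots> = a ^ Suc m * b" by (simp add: Suc.IH mult.assoc)
    finally show ?case .
  qed
  have IH: "(a * b) ^ m = a ^ m * b ^ m" using Suc by blast
  have "(a * b) ^ Suc m = (a * b) * (a ^ m * b ^ m)" by (simp only: power_Suc IH)
  also have "\<dots> = a * (b * a ^ m) * b ^ m" by (simp only: mult.assoc)
  also have "\<dots> = a * (a ^ m * b) * b ^ m" by (simp only: bm)
  also have "\<dots> = a ^ Suc m * b ^ Suc m" by (simp only: mult.assoc power_Suc)
  finally show ?case .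
qed

context RM begin

lemma inter_Rt: "Delta_cop b * Rt q n \<approx> Rt q n * Delta b"
proof (induction b rule: free_induct)
  case (1 c) then show ?case by (simp add: Delta_sc Dcop_sc)
next
  case (2 x) then show ?case
    by (cases x) (simp_all add: case_K case_Kb case_L case_Lb case_E case_F)
next
  case (3 a b) then show ?case by (simp add: Delta_add Dcop_add distrib_left distrib_right cm_add)
next
  case (4 a b)
  have "Delta_cop (a * b) * Rt q n = Delta_cop a * (Delta_cop b * Rt q n)" by (simp add: Dcop_mult mult.assoc)
  also have "\<dots> \<approx> Delta_cop a * (Rt q n * Delta b)" by (rule cm_multL[OF 4(2)])
  also have "\<dots> = (Delta_cop a * Rt q n) * Delta b" by (simp add: mult.assoc)
  also have "\<dots> \<approx> (Rt q n * Delta a) * Delta b" by (rule cm_multR[OF 4(1)])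
  also have "\<dots> = Rt q n * Delta (a * b)" by (simp add: Delta_mult mult.assoc)
  finally show ?case .
qed

lemma R_Rt: "Rtilde q n \<approx> Rt q n" using R_decomp by (simp add: Rt_def)

lemma inter: "Delta_cop b * Rtilde q n \<approx> Rtilde q n * Delta b"
proof -
  have "Delta_cop b * Rtilde q n \<approx> Delta_cop b * Rt q n" by (rule cm_multL[OF R_Rt])
  also have "\<dots> \<approx> Rt q n * Delta b" by (rule inter_Rt)
  also have "\<dots> \<approx> Rtilde q n * Delta b" by (rule cm_multR[OF cm_sym[OF R_Rt]])
  finally show ?thesis .
qed

definition vv where "vv = T (gen E) (gen F)"
definition Xv where "Xv = (\<Sum>m<n. smul (am q m) (vv ^ m))"
definition Yv where "Yv = (\<Sum>k<n. (1 - Xv) ^ k)"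
definition Rd where "Rd = Yv * Hdm q n * eT"

lemma X_Xv: "Xm q n \<approx> Xv"
  unfolding Xm_def Xv_def vv_def by (intro cm_sum cm_smul cm_sym[OF T_pow])

lemma Xv_Yv: "Xv * Yv \<approx> 1"
proof -
  obtain N where nN: "n = Suc N" using n_gt1 by (cases n) auto
  let ?S = "\<Sum>m<N. smul (am q (Suc m)) (vv ^ m)"
  have "Xv = (\<Sum>m<Suc N. smul (am q m) (vv ^ m))" unfolding Xv_def by (simp only: nN)
  also have "\<dots> = (\<Sum>m<N. smul (am q (Suc m)) (vv ^ Suc m)) + smul (am q 0) (vv ^ 0)"
    by (simp only: sum.lessThan_Suc_shift add.commute)
  also have "\<dots> = 1 + vv * ?S" by (simp add: am_0 sum_distrib_left)
  finally have X1: "1 - Xv = vv * (- ?S)" by simp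
  have comm: "vv * (- ?S) = (- ?S) * vv"
    by (simp add: sum_distrib_left sum_distrib_right power_commutes)
  have "Xv * Yv = (1 - (1 - Xv)) * (\<Sum>k<n. (1 - Xv) ^ k)" by (simp add: Yv_def)
  also have "\<dots> = 1 - (1 - Xv) ^ n" by (rule telescope)
  also have "\<dots> = 1 - vv ^ n * (- ?S) ^ n" by (simp only: X1 comm_pow[OF comm])
  also have "\<dots> \<approx> 1 - T (gen E ^ n) (gen F ^ n) * (- ?S) ^ n"
    unfolding vv_def by (intro cm_diff cm_refl cm_multR T_pow)
  also have "\<dots> \<approx> 1 - T 0 (gen F ^ n) * (- ?S) ^ n" by (intro cm_diff cm_refl cm_multR T_cong1 REn)
  finally show ?thesis by simp
qed

lemma X_Yv: "Xm q n * Yv \<approx> 1"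
  by (rule cm_trans[OF cm_multR[OF X_Xv] Xv_Yv])

lemma Rt_Rd: "Rt q n * Rd \<approx> eT"
proof -
  have "Rt q n * Rd = eT * Hm q n * (Xm q n * Yv) * Hdm q n * eT" by (simp add: Rt_def Rd_def mult.assoc)
  also have "\<dots> \<approx> eT * Hm q n * 1 * Hdm q n * eT" by (intro cm_multR cm_multL X_Yv)
  also have "\<dots> = eT * (Hm q n * Hdm q n) * eT" by (simp add: mult.assoc)
  also have "\<dots> \<approx> eT * 1 * eT" by (intro cm_multR cm_multL H_Hd)
  also have "\<dots> \<approx> eT" using eT_idem by simp
  finally show ?thesis .
qed

lemma eT_Rt: "eT * Rt q n \<approx> Rt q n"
  unfolding Rt_def mult.assoc[symmetric] by (intro cm_multR eT_idem)

lemma Rd_eT: "Rd * eT \<approx> Rd"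
  unfolding Rd_def mult.assoc by (intro cm_multL eT_idem)

lemma R_Rd_R: "Rtilde q n * Rd * Rtilde q n \<approx> Rtilde q n"
proof -
  have "Rtilde q n * Rd * Rtilde q n \<approx> Rt q n * Rd * Rt q n" by (intro cm_mult cm_refl R_Rt)
  also have "\<dots> \<approx> eT * Rt q n" by (intro cm_multR Rt_Rd)
  also have "\<dots> \<approx> Rt q n" by (rule eT_Rt)
  also have "\<dots> \<approx> Rtilde q n" by (rule cm_sym[OF R_Rt])
  finally show ?thesis .
qed

lemma Rd_R_Rd: "Rd * Rtilde q n * Rd \<approx> Rd"
proof -
  have "Rd * Rtilde q n * Rd \<approx> Rd * Rt q n * Rd" by (intro cm_mult cm_refl R_Rt)
  also have "\<dots> = Rd * (Rt q n * Rd)" by (simp add: mult.assoc)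
  also have "\<dots> \<approx> Rd * eT" by (intro cm_multL Rt_Rd)
  also have "\<dots> \<approx> Rd" by (rule Rd_eT)
  finally show ?thesis .
qed

end

theorem mainTheorem14:
  fixes n :: nat and q :: complex
  assumes "odd n" and "n > 1"
    and "q ^ n = 1" and "\<forall>k. 0 < k \<and> k < n \<longrightarrow> q ^ k \<noteq> 1"
  shows "(\<forall>b :: G free. cong_mod (rels_tensor q n)
            (Delta_cop b * Rtilde q n) (Rtilde q n * Delta b))
       \<and> (\<exists>Rd :: (G + G) free.
            cong_mod (rels_tensor q n) (Rtilde q n * Rd * Rtilde q n) (Rtilde q n)
          \<and> cong_mod (rels_tensor q n) (Rd * Rtilde q n * Rd) Rd)"
proof -
  interpret RM q n using assms by unfold_locales auto
  show ?thesis using inter R_Rd_R Rd_R_Rd by blast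
qed


end
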